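(* Let $\delta=(\mathbf a_1,\mathbf a_2,\mathbf a_3)$ be a nondegenerate m-triangle with central angle $\alpha_1$ opposite to the vector $\mathbf a_1$. Then the area of the spherical triangle in the shape sphere $M^\ast\simeq S^2(1/2)$ with vertices $\mathfrak b_{12},\delta^\ast,\mathfrak b_{31}$ equals $A_1=\frac12(\pi-\alpha_1)$.
   Context: Masses $m_1,m_2,m_3>0$, $m_1+m_2+m_3=1$; $\mathbf a_i\in\mathbb R^3$ with $\sum m_i\mathbf a_i=0$; $\alpha_1$ is the angle at the origin between $\mathbf a_2$ and $\mathbf a_3$. The shape sphere $M^\ast$ is the space of oriented m-triangles with $\sum m_i|\mathbf a_i|^2=1$ modulo rotation, with the kinematic metric (induced by $\sum m_i|d\mathbf a_i|^2$ via zero angular momentum lifts), a round sphere of radius $1/2$ whose equator consists of collinear shapes; $\delta^\ast$ is the shape of $\delta$ (lying in the hemisphere determined by the orientation of $\delta$), and $\mathfrak b_{ij}$ is the binary collision shape on the equator where $\mathbf a_i=\mathbf a_j$. The spherical triangle is the geodesic triangle in that hemisphere. *)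

theory Defs
  imports "HOL-Analysis.Analysis" "HOL-Analysis.Cross3"
begin

definition is_mtriangle :: "(nat \<Rightarrow> real) \<Rightarrow> (nat \<Rightarrow> real^3) \<Rightarrow> bool" where
  "is_mtriangle m a \<longleftrightarrow> m 1 *\<^sub>R a 1 + m 2 *\<^sub>R a 2 + m 3 *\<^sub>R a 3 = 0"

definition nondegenerate :: "(nat \<Rightarrow> real^3) \<Rightarrow> bool" where
  "nondegenerate a \<longleftrightarrow> cross3 (a 2 - a 1) (a 3 - a 1) \<noteq> 0"

definition vec_angle :: "real^3 \<Rightarrow> real^3 \<Rightarrow> real" where
  "vec_angle x y = arccos ((x \<bullet> y) / (norm x * norm y))"

definition inertia :: "(nat \<Rightarrow> real) \<Rightarrow> (nat \<Rightarrow> real^3) \<Rightarrow> real" where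
  "inertia m a = m 1 * (norm (a 1))\<^sup>2 + m 2 * (norm (a 2))\<^sup>2 + m 3 * (norm (a 3))\<^sup>2"

text \<open>Mass-weighted Jacobi vectors: for centred configurations,
  inertia m a = |jacobi1|^2 + |jacobi2|^2 (total mass 1).\<close>
definition jacobi1 :: "(nat \<Rightarrow> real) \<Rightarrow> (nat \<Rightarrow> real^3) \<Rightarrow> real^3" where
  "jacobi1 m a = sqrt (m 1 * m 2 / (m 1 + m 2)) *\<^sub>R (a 2 - a 1)"

definition jacobi2 :: "(nat \<Rightarrow> real) \<Rightarrow> (nat \<Rightarrow> real^3) \<Rightarrow> real^3" where
  "jacobi2 m a = sqrt ((m 1 + m 2) * m 3) *\<^sub>R
     (a 3 - (1 / (m 1 + m 2)) *\<^sub>R (m 1 *\<^sub>R a 1 + m 2 *\<^sub>R a 2))"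

text \<open>The shape map onto the round sphere of radius 1/2 in R^3 (Hopf map in Jacobi
  coordinates, applied to the normalised configuration a / sqrt(inertia)); this is an
  isometry of the shape sphere M* with the kinematic metric onto S^2(1/2).  The equator
  (third coordinate 0) consists of the collinear shapes; the upper hemisphere is used as
  the hemisphere of the orientation of the triangle.\<close>
definition shape :: "(nat \<Rightarrow> real) \<Rightarrow> (nat \<Rightarrow> real^3) \<Rightarrow> real^3" where
  "shape m a = (let z1 = jacobi1 m a; z2 = jacobi2 m a in
     (1 / inertia m a) *\<^sub>R
       vector [((norm z1)\<^sup>2 - (norm z2)\<^sup>2) / 2, z1 \<bullet> z2, norm (cross3 z1 z2)])"

definition binary_collision :: "(nat \<Rightarrow> real) \<Rightarrow> nat \<Rightarrow> nat \<Rightarrow> real^3" where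
  "binary_collision m i j = (THE p. \<forall>a. is_mtriangle m a \<and> a i = a j \<and> inertia m a \<noteq> 0
       \<longrightarrow> shape m a = p)"

text \<open>Geodesic (spherical) triangle on the sphere of radius r centred at 0 with vertices
  P, Q, R lying in a common hemisphere: the intersection of the sphere with the convex
  cone spanned by the vertices.\<close>
definition sph_triangle :: "real \<Rightarrow> real^3 \<Rightarrow> real^3 \<Rightarrow> real^3 \<Rightarrow> (real^3) set" where
  "sph_triangle r P Q R = {x. norm x = r \<and>
     (\<exists>u v w. u \<ge> 0 \<and> v \<ge> 0 \<and> w \<ge> 0 \<and> x = u *\<^sub>R P + v *\<^sub>R Q + w *\<^sub>R R)}"

text \<open>Surface area of a subset S of the sphere of radius r centred at 0, via the volume of
  the solid cone over S: vol(cone) = (r/3) * area(S).\<close>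
definition sph_area :: "real \<Rightarrow> (real^3) set \<Rightarrow> real" where
  "sph_area r S = 3 / r * measure lebesgue {t *\<^sub>R x | t x. 0 \<le> t \<and> t \<le> 1 \<and> x \<in> S}"

end

theory Submission
  imports Defs
begin

lemma ball_vol3: "r \<ge> 0 \<Longrightarrow> measure lebesgue (cball (0::real^3) r) = 4/3 * r^3 * pi"
proof -
  assume r: "r \<ge> 0"
  have "measure lebesgue (cball (0::real^3) r) = measure lborel (cball (0::real^3) r)"
    by (simp add: measure_completion)
  also have "\<dots> = measure lborel (ball (0::real^3) r)" by (rule content_cball_conv_ball)
  also have "\<dots> = 4/3 * r^3 * pi" using sphere_volume r by blast
  finally show ?thesis .
qed

lemma compact_half: "compact S \<Longrightarrow> compact (S \<inter> {x. n \<bullet> x \<ge> (0::real)})"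
  by (simp add: closed_halfspace_ge compact_Int_closed)
lemma compact_half': "compact S \<Longrightarrow> compact (S \<inter> {x. n \<bullet> x \<le> (0::real)})"
  by (simp add: closed_halfspace_le compact_Int_closed)

lemma split_half:
  fixes S :: "(real^3) set"
  assumes "compact S" "n \<noteq> 0"
  shows "measure lebesgue S = measure lebesgue (S \<inter> {x. n \<bullet> x \<ge> 0}) + measure lebesgue (S \<inter> {x. n \<bullet> x \<le> 0})"
proof -
  let ?A = "S \<inter> {x. n \<bullet> x \<ge> 0}" and ?B = "S \<inter> {x. n \<bullet> x \<le> 0}"
  have neg: "negligible (?A \<inter> ?B)"
    by (rule negligible_subset[OF negligible_hyperplane[of n 0]]) (use assms in auto)
  have "?A \<union> ?B \<union> {} = S" by auto
  then have "measure lebesgue S = measure lebesgue ?A + measure lebesgue ?B + measure lebesgue {}"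
    using measure_Un3_negligible[of ?A ?B "{}" S] neg assms
    by (auto intro!: lmeasurable_compact compact_half compact_half')
  then show ?thesis by simp
qed

lemma half_ball:
  fixes n :: "real^3"
  assumes "n \<noteq> 0" "r \<ge> 0"
  shows "measure lebesgue (cball 0 r \<inter> {x. n \<bullet> x \<ge> 0}) = 2/3 * r^3 * pi"
proof -
  have ot: "orthogonal_transformation (uminus :: real^3 \<Rightarrow> real^3)"
    by (simp add: orthogonal_transformation linear_uminus)
  have im: "uminus ` (cball 0 r \<inter> {x. n \<bullet> x \<ge> 0}) = cball (0::real^3) r \<inter> {x. n \<bullet> x \<le> 0}"
    by (auto simp: image_iff intro!: bexI[where x="- _"])
  have "measure lebesgue (cball (0::real^3) r \<inter> {x. n \<bullet> x \<le> 0}) = measure lebesgue (cball 0 r \<inter> {x. n \<bullet> x \<ge> 0})"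
    unfolding im[symmetric]
    by (rule measure_orthogonal_image[OF ot]) (auto intro!: lmeasurable_compact compact_half)
  moreover have "measure lebesgue (cball (0::real^3) r) = measure lebesgue (cball 0 r \<inter> {x. n \<bullet> x \<ge> 0}) + measure lebesgue (cball 0 r \<inter> {x. n \<bullet> x \<le> 0})"
    by (rule split_half) (use assms in auto)
  ultimately show ?thesis using ball_vol3[OF assms(2)] by (simp add: field_simps)
qed

definition rot :: "real \<Rightarrow> real^3 \<Rightarrow> real^3" where
  "rot t x = vector [cos t * x$1 - sin t * x$2, sin t * x$1 + cos t * x$2, x$3]"

lemma rot_aux1: "cos t * (cos t * a - sin t * b) + sin t * (sin t * a + cos t * b) = (a::real)"
  using sin_cos_squared_add[of t] by algebra
lemma rot_aux2: "cos t * (sin t * a + cos t * b) - sin t * (cos t * a - sin t * b) = (b::real)"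
  using sin_cos_squared_add[of t] by algebra
lemma rot_aux3: "(cos t * a - sin t * b)^2 + (sin t * a + cos t * b)^2 = (a::real)^2 + b^2"
  using sin_cos_squared_add[of t] by algebra

lemma rot_comp: "rot (-t) (rot t x) = x"
  unfolding rot_def
  by (simp add: vec_eq_iff forall_3 vector_3 rot_aux1 rot_aux2)

lemma inner3: "(x::real^3) \<bullet> y = x$1 * y$1 + x$2 * y$2 + x$3 * y$3"
  by (simp add: inner_vec_def sum_3)

lemma rot_ot: "orthogonal_transformation (rot t)"
proof -
  have "linear (rot t)"
    by (rule linearI) (simp_all add: rot_def vec_eq_iff forall_3 vector_3 algebra_simps)
  moreover have "norm (rot t v) = norm v" for v
  proof -
    have "rot t v \<bullet> rot t v = v \<bullet> v"
      unfolding inner3 rot_def vector_3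
      using rot_aux3[of t "v$1" "v$2"] by (simp add: power2_eq_square)
    then show ?thesis by (simp add: norm_eq_sqrt_inner)
  qed
  ultimately show ?thesis by (simp add: orthogonal_transformation)
qed

definition W :: "real \<Rightarrow> real \<Rightarrow> (real^3) set" where
  "W r t = cball 0 r \<inter> {x. x$2 \<ge> 0 \<and> sin t * x$1 - cos t * x$2 \<ge> 0}"

lemma W_eq: "W r t = (cball 0 r \<inter> {x. (axis 2 1 :: real^3) \<bullet> x \<ge> 0}) \<inter> {x. vector [sin t, - cos t, 0] \<bullet> x \<ge> 0}"
  unfolding W_def by (auto simp: inner3 vector_3 axis_def)

lemma W_compact: "compact (W r t)"
  unfolding W_eq by (intro compact_half compact_cball)

lemma W_meas: "W r t \<in> lmeasurable"
  by (rule lmeasurable_compact[OF W_compact])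

lemma rot_comp2: "rot t (rot (-t) x) = x"
  using rot_comp[of "-t"] by simp

lemma in_rot_image: "x \<in> rot t ` S \<longleftrightarrow> rot (-t) x \<in> S"
  by (metis image_iff rot_comp rot_comp2)

lemma norm_rot: "norm (rot t x) = norm x"
  using rot_ot orthogonal_transformation by blast

lemma wedge2d:
  fixes x1 x2 t1 t2 :: real
  assumes "0 < t1" "0 < t2" "t1 + t2 \<le> pi"
  shows "(x2 \<ge> 0 \<and> sin (t1+t2) * x1 - cos (t1+t2) * x2 \<ge> 0) \<longleftrightarrow>
    ((x2 \<ge> 0 \<and> sin t1 * x1 - cos t1 * x2 \<ge> 0) \<or>
     (- sin t1 * x1 + cos t1 * x2 \<ge> 0 \<and> sin (t1+t2) * x1 - cos (t1+t2) * x2 \<ge> 0))"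
proof -
  have st2: "sin t2 = sin (t1+t2) * cos t1 - cos (t1+t2) * sin t1"
    using sin_diff[of "t1+t2" t1] by simp
  have s1: "sin t1 > 0" using assms by (intro sin_gt_zero) auto
  have s2: "sin t2 > 0" using assms by (intro sin_gt_zero) auto
  have s12: "sin (t1+t2) \<ge> 0" using assms by (intro sin_ge_zero) auto
  have I1: "sin t1 * (sin (t1+t2) * x1 - cos (t1+t2) * x2) = sin t2 * x2 + sin (t1+t2) * (sin t1 * x1 - cos t1 * x2)"
    unfolding st2 by (simp add: algebra_simps)
  have I2: "sin (t1+t2) * (- sin t1 * x1 + cos t1 * x2) + sin t1 * (sin (t1+t2) * x1 - cos (t1+t2) * x2) = sin t2 * x2"
    unfolding st2 by (simp add: algebra_simps)
  show ?thesis
  proof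
    assume "x2 \<ge> 0 \<and> sin (t1+t2) * x1 - cos (t1+t2) * x2 \<ge> 0"
    then show "((x2 \<ge> 0 \<and> sin t1 * x1 - cos t1 * x2 \<ge> 0) \<or>
     (- sin t1 * x1 + cos t1 * x2 \<ge> 0 \<and> sin (t1+t2) * x1 - cos (t1+t2) * x2 \<ge> 0))" by auto
  next
    assume "((x2 \<ge> 0 \<and> sin t1 * x1 - cos t1 * x2 \<ge> 0) \<or>
     (- sin t1 * x1 + cos t1 * x2 \<ge> 0 \<and> sin (t1+t2) * x1 - cos (t1+t2) * x2 \<ge> 0))"
    then show "x2 \<ge> 0 \<and> sin (t1+t2) * x1 - cos (t1+t2) * x2 \<ge> 0"
    proof
      assume h: "x2 \<ge> 0 \<and> sin t1 * x1 - cos t1 * x2 \<ge> 0"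
      have "sin t2 * x2 + sin (t1+t2) * (sin t1 * x1 - cos t1 * x2) \<ge> 0"
        using h s2 s12 by (simp add: add_nonneg_nonneg)
      then have "sin t1 * (sin (t1+t2) * x1 - cos (t1+t2) * x2) \<ge> 0" using I1 by simp
      then show ?thesis using h s1 by (simp add: zero_le_mult_iff)
    next
      assume h: "- sin t1 * x1 + cos t1 * x2 \<ge> 0 \<and> sin (t1+t2) * x1 - cos (t1+t2) * x2 \<ge> 0"
      have "sin (t1+t2) * (- sin t1 * x1 + cos t1 * x2) + sin t1 * (sin (t1+t2) * x1 - cos (t1+t2) * x2) \<ge> 0"
        using h s1 s12 by (simp add: add_nonneg_nonneg)
      then have "sin t2 * x2 \<ge> 0" using I2 by simp
      then show ?thesis using h s2 by (simp add: zero_le_mult_iff)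
    qed
  qed
qed

lemma rot_neg_comp: "rot (-t) x = vector [cos t * x$1 + sin t * x$2, - sin t * x$1 + cos t * x$2, x$3]"
  by (simp add: rot_def)

lemma W_add:
  assumes "0 < t1" "0 < t2" "t1 + t2 \<le> pi"
  shows "measure lebesgue (W r (t1+t2)) = measure lebesgue (W r t1) + measure lebesgue (W r t2)"
proof -
  have key: "sin t2 * (cos t1 * a + sin t1 * b) - cos t2 * (- sin t1 * a + cos t1 * b)
      = sin (t1+t2) * a - cos (t1+t2) * b" for a b
    by (simp add: sin_add cos_add algebra_simps)
  have rotW: "rot t1 ` W r t2 = cball 0 r \<inter> {x. - sin t1 * x$1 + cos t1 * x$2 \<ge> 0 \<and> sin (t1+t2) * x$1 - cos (t1+t2) * x$2 \<ge> 0}"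
  proof (rule set_eqI)
    fix x :: "real^3"
    have y1: "rot (-t1) x $ 1 = cos t1 * x$1 + sin t1 * x$2" by (simp add: rot_neg_comp vector_3)
    have y2: "rot (-t1) x $ 2 = - sin t1 * x$1 + cos t1 * x$2" by (simp add: rot_neg_comp vector_3)
    have "x \<in> rot t1 ` W r t2 \<longleftrightarrow> norm x \<le> r \<and> rot (-t1) x $ 2 \<ge> 0 \<and> sin t2 * rot (-t1) x $ 1 - cos t2 * rot (-t1) x $ 2 \<ge> 0"
      by (simp add: in_rot_image W_def norm_rot)
    also have "\<dots> \<longleftrightarrow> norm x \<le> r \<and> - sin t1 * x$1 + cos t1 * x$2 \<ge> 0 \<and> sin (t1+t2) * x$1 - cos (t1+t2) * x$2 \<ge> 0"
      unfolding y1 y2 key ..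
    finally show "x \<in> rot t1 ` W r t2 \<longleftrightarrow> x \<in> cball 0 r \<inter> {x. - sin t1 * x$1 + cos t1 * x$2 \<ge> 0 \<and> sin (t1+t2) * x$1 - cos (t1+t2) * x$2 \<ge> 0}"
      by simp
  qed
  have un: "W r t1 \<union> rot t1 ` W r t2 \<union> {} = W r (t1+t2)"
    unfolding rotW unfolding W_def
  proof (intro set_eqI)
    fix x :: "real^3"
    show "x \<in> cball 0 r \<inter> {x. 0 \<le> x $ 2 \<and> 0 \<le> sin t1 * x $ 1 - cos t1 * x $ 2} \<union>
         cball 0 r \<inter> {x. 0 \<le> - sin t1 * x $ 1 + cos t1 * x $ 2 \<and> 0 \<le> sin (t1 + t2) * x $ 1 - cos (t1 + t2) * x $ 2} \<union> {}
       \<longleftrightarrow> x \<in> cball 0 r \<inter> {x. 0 \<le> x $ 2 \<and> 0 \<le> sin (t1 + t2) * x $ 1 - cos (t1 + t2) * x $ 2}"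
      using wedge2d[OF assms, of "x$2" "x$1"] by blast
  qed
  have neg: "negligible (W r t1 \<inter> rot t1 ` W r t2)"
  proof (rule negligible_subset[OF negligible_hyperplane[of "vector [- sin t1, cos t1, 0] :: real^3" 0]])
    show "vector [- sin t1, cos t1, 0] \<noteq> (0::real^3) \<or> (0::real) \<noteq> 0"
      using sin_cos_squared_add[of t1] by (auto simp: vec_eq_iff forall_3 vector_3 power2_eq_square)
    show "W r t1 \<inter> rot t1 ` W r t2 \<subseteq> {x. vector [- sin t1, cos t1, 0] \<bullet> x = 0}"
      unfolding rotW unfolding W_def by (auto simp: inner3 vector_3)
  qed
  have m2: "measure lebesgue (rot t1 ` W r t2) = measure lebesgue (W r t2)"
    by (rule measure_orthogonal_image[OF rot_ot W_meas])
  have "measure lebesgue (W r (t1+t2)) = measure lebesgue (W r t1) + measure lebesgue (rot t1 ` W r t2) + measure lebesgue {}"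
    using measure_Un3_negligible[of "W r t1" "rot t1 ` W r t2" "{}" "W r (t1+t2)"] W_meas measurable_orthogonal_image[OF rot_ot W_meas] neg un by auto
  then show ?thesis using m2 by simp
qed

lemma W_pi: "r \<ge> 0 \<Longrightarrow> measure lebesgue (W r pi) = 2/3 * r^3 * pi"
proof -
  assume r: "r \<ge> 0"
  have "W r pi = cball 0 r \<inter> {x. (axis 2 1 :: real^3) \<bullet> x \<ge> 0}"
    unfolding W_def by (auto simp: inner3 axis_def)
  then show ?thesis using half_ball[of "axis 2 1" r] r by (simp add: axis_eq_0_iff)
qed

lemma W_nonneg: "measure lebesgue (W r t) \<ge> 0" by simp

lemma W_mono: "0 < t \<Longrightarrow> t \<le> t' \<Longrightarrow> t' \<le> pi \<Longrightarrow> measure lebesgue (W r t) \<le> measure lebesgue (W r t')"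
proof (cases "t = t'")
  case False
  assume a: "0 < t" "t \<le> t'" "t' \<le> pi"
  then have "measure lebesgue (W r (t + (t'-t))) = measure lebesgue (W r t) + measure lebesgue (W r (t'-t))"
    using False by (intro W_add) auto
  then show ?thesis by simp
qed simp

lemma W_mult:
  assumes "n \<ge> 1"
  shows "k \<ge> 1 \<Longrightarrow> k \<le> n \<Longrightarrow> measure lebesgue (W r (real k * pi / real n)) = real k * measure lebesgue (W r (pi / real n))"
proof (induction k rule: nat_induct_at_least)
  case base then show ?case by simp
next
  case (Suc k)
  have "real (Suc k) * pi / real n = real k * pi / real n + pi / real n"
    by (simp add: ring_distribs add_divide_distrib)
  moreover have "measure lebesgue (W r (real k * pi / real n + pi / real n)) = measure lebesgue (W r (real k * pi / real n)) + measure lebesgue (W r (pi / real n))"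
  proof (rule W_add)
    show "0 < real k * pi / real n" using Suc assms by simp
    show "0 < pi / real n" using assms by simp
    have "real k * pi / real n + pi / real n = real (Suc k) * pi / real n" by (simp add: ring_distribs add_divide_distrib)
    also have "\<dots> \<le> real n * pi / real n" using Suc by (intro divide_right_mono mult_right_mono) auto
    also have "\<dots> = pi" using assms by simp
    finally show "real k * pi / real n + pi / real n \<le> pi" .
  qed
  ultimately show ?case using Suc by (simp add: algebra_simps)
qed

lemma W_lin:
  assumes r: "r \<ge> 0" and t: "0 < t" "t \<le> pi"
  shows "measure lebesgue (W r t) = 2/3 * r^3 * t"
proof -
  define c where "c = 2/3 * r^3"
  have c0: "c \<ge> 0" using r by (simp add: c_def)
  have fn: "measure lebesgue (W r (pi / real n)) = c * pi / real n" if n: "n \<ge> 1" for n :: nat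
  proof -
    have "measure lebesgue (W r (real n * pi / real n)) = real n * measure lebesgue (W r (pi / real n))"
      using W_mult[OF n n order_refl] .
    then show ?thesis using n W_pi[OF r] by (simp add: c_def field_simps)
  qed
  have fk: "measure lebesgue (W r (real k * pi / real n)) = c * (real k * pi / real n)" if "n \<ge> 1" "k \<ge> 1" "k \<le> n" for n k :: nat
    using W_mult[OF that(1) that(2,3)] fn[OF that(1)] by simp
  show ?thesis
  proof (cases "t = pi")
    case True then show ?thesis using W_pi[OF r] by simp
  next
    case False
    with t have tp: "t < pi" by simp
    have bound: "\<bar>measure lebesgue (W r t) - c * t\<bar> \<le> c * pi / real n" if n: "n \<ge> 1" for n :: nat
    proof -
      define k where "k = nat \<lfloor>real n * t / pi\<rfloor>"
      have fl0: "0 \<le> \<lfloor>real n * t / pi\<rfloor>" using t by simp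
      have kle: "real k \<le> real n * t / pi" unfolding k_def using fl0 by simp
      have kgt: "real n * t / pi < real k + 1" unfolding k_def using fl0 by linarith
      have kn: "k + 1 \<le> n"
      proof -
        have "real n * t / pi < real n" using tp t n by (simp add: field_simps)
        then have "real k < real n" using kle by linarith
        then show ?thesis by simp
      qed
      have lo1: "real k * pi / real n \<le> t" using kle n by (simp add: field_simps)
      have hi1: "t < real (k+1) * pi / real n" using kgt n by (simp add: field_simps)
      have up: "measure lebesgue (W r t) \<le> c * (real (k+1) * pi / real n)"
      proof -
        have "measure lebesgue (W r t) \<le> measure lebesgue (W r (real (k+1) * pi / real n))"
        proof (rule W_mono)
        have "real (k+1) * pi \<le> real n * pi" using kn by (intro mult_right_mono) auto
        then show "real (k+1) * pi / real n \<le> pi" using n by (simp add: field_simps)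
      qed (use t hi1 in auto)
        also have "\<dots> = c * (real (k+1) * pi / real n)" by (rule fk) (use n kn in auto)
        finally show ?thesis .
      qed
      have lo: "measure lebesgue (W r t) \<ge> c * (real k * pi / real n)"
      proof (cases "k = 0")
        case True then show ?thesis by simp
      next
        case False
        have "c * (real k * pi / real n) = measure lebesgue (W r (real k * pi / real n))"
          by (rule fk[symmetric]) (use n kn False in auto)
        also have "\<dots> \<le> measure lebesgue (W r t)"
          by (rule W_mono) (use t lo1 n False in auto)
        finally show ?thesis .
      qed
      have e1: "c * (real (k+1) * pi / real n) = c * (real k * pi / real n) + c * pi / real n"
        by (simp add: ring_distribs add_divide_distrib)
      have "c * (real k * pi / real n) \<le> c * t" using lo1 c0 by (rule mult_left_mono)
      moreover have "c * t \<le> c * (real (k+1) * pi / real n)" using hi1 c0 by (intro mult_left_mono) auto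
      ultimately show ?thesis using up lo e1 by linarith
    qed
    show ?thesis
    proof (rule ccontr)
      assume ne: "measure lebesgue (W r t) \<noteq> 2/3 * r^3 * t"
      define d where "d = \<bar>measure lebesgue (W r t) - c * t\<bar>"
      have d0: "d > 0" using ne by (simp add: d_def c_def)
      obtain n :: nat where n: "real n > c * pi / d" using reals_Archimedean2 by blast
      have "c * pi / d \<ge> 0" using c0 d0 by simp
      then have n1: "n \<ge> 1" using n by (cases n) auto
      have "d \<le> c * pi / real n" using bound[OF n1] by (simp add: d_def)
      then have "d * real n \<le> c * pi" using n1 by (simp add: field_simps)
      moreover have "c * pi < real n * d" using n d0 by (simp add: field_simps)
      ultimately show False by (simp add: algebra_simps)
    qed
  qed
qed

lemma va_props:
  fixes x y :: "real^3"
  assumes "cross3 x y \<noteq> 0"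
  shows "cos (vec_angle x y) = (x \<bullet> y) / (norm x * norm y)"
    and "sin (vec_angle x y) = norm (cross3 x y) / (norm x * norm y)"
    and "0 < vec_angle x y" and "vec_angle x y < pi"
proof -
  have x0: "x \<noteq> 0" and y0: "y \<noteq> 0" using assms by auto
  define N where "N = norm x * norm y"
  have N0: "N > 0" using x0 y0 by (simp add: N_def)
  define c where "c = (x \<bullet> y) / N"
  have ncd: "(norm (cross3 x y))\<^sup>2 + (x \<bullet> y)\<^sup>2 = N\<^sup>2" unfolding N_def by (rule norm_cross_dot)
  have key: "c\<^sup>2 = 1 - (norm (cross3 x y) / N)\<^sup>2"
    unfolding c_def using ncd N0 by (simp add: field_simps power_divide)
  have cp: "(norm (cross3 x y) / N)\<^sup>2 > 0" using assms N0 by simp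
  have c2: "c\<^sup>2 < 1" using key cp by linarith
  have cabs: "\<bar>c\<bar> < 1"
    using c2 by (metis abs_le_square_iff abs_of_nonneg not_less one_power2 zero_le_one abs_ge_zero order_le_less) 
  have va: "vec_angle x y = arccos c" unfolding vec_angle_def c_def N_def ..
  show "cos (vec_angle x y) = (x \<bullet> y) / (norm x * norm y)"
    unfolding va using cabs by (simp add: cos_arccos_abs c_def N_def)
  have "sin (vec_angle x y) = sqrt (1 - c\<^sup>2)" unfolding va using cabs by (simp add: sin_arccos_abs)
  also have "\<dots> = norm (cross3 x y) / N" unfolding key using N0 by simp
  finally show "sin (vec_angle x y) = norm (cross3 x y) / (norm x * norm y)" by (simp add: N_def)
  have "arccos c \<ge> 0" "arccos c \<le> pi" using cabs by (auto intro!: arccos_lbound arccos_ubound)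
  moreover have "arccos c \<noteq> 0" using cabs arccos_eq_0_iff[of c] by (auto simp: abs_less_iff)
  moreover have "arccos c \<noteq> pi" using cabs arccos_eq_pi_iff[of c] by (auto simp: abs_less_iff)
  ultimately show "0 < vec_angle x y" "vec_angle x y < pi" unfolding va by auto
qed

lemma lune:
  fixes n1 n2 :: "real^3"
  assumes cr: "cross3 n1 n2 \<noteq> 0" and r: "r \<ge> 0"
  shows "measure lebesgue (cball 0 r \<inter> {x. n1 \<bullet> x \<ge> 0} \<inter> {x. n2 \<bullet> x \<ge> 0}) = 2/3 * r^3 * (pi - vec_angle n1 n2)"
proof -
  define \<beta> where "\<beta> = vec_angle n1 n2"
  note vp = va_props[OF cr, folded \<beta>_def]
  have n10: "n1 \<noteq> 0" and n20: "n2 \<noteq> 0" using cr by auto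
  define cb where "cb = cos \<beta>"
  define sb where "sb = sin \<beta>"
  have sb0: "sb > 0" unfolding sb_def using vp by (intro sin_gt_zero) auto
  have sc: "sb\<^sup>2 + cb\<^sup>2 = 1" unfolding sb_def cb_def by simp
  define v where "v = (1 / norm n1) *\<^sub>R n1"
  define h where "h = (1 / norm n2) *\<^sub>R n2"
  define u where "u = (1 / sb) *\<^sub>R (h - cb *\<^sub>R v)"
  define w where "w = cross3 u v"
  have vv: "v \<bullet> v = 1" unfolding v_def using n10 by (simp add: inner_commute power2_norm_eq_inner[symmetric] field_simps power2_eq_square)
  have hh: "h \<bullet> h = 1" unfolding h_def using n20 by (simp add: inner_commute power2_norm_eq_inner[symmetric] field_simps power2_eq_square)
  have vh: "v \<bullet> h = cb" unfolding v_def h_def cb_def vp(1) by (simp add: field_simps)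
  have hvec: "h = sb *\<^sub>R u + cb *\<^sub>R v" unfolding u_def using sb0 by simp
  have uv: "u \<bullet> v = 0" unfolding u_def using vv vh by (simp add: inner_diff_left inner_diff_right inner_commute)
  have uu: "u \<bullet> u = 1"
  proof -
    have "(h - cb *\<^sub>R v) \<bullet> (h - cb *\<^sub>R v) = 1 - cb\<^sup>2"
      using vv vh hh by (simp add: inner_diff_left inner_diff_right inner_commute power2_eq_square)
    also have "\<dots> = sb\<^sup>2" using sc by simp
    finally show ?thesis unfolding u_def using sb0 by (simp add: power2_eq_square)
  qed
  have wu: "w \<bullet> u = 0" and wv: "w \<bullet> v = 0" unfolding w_def by (simp_all add: dot_cross_self)
  have ww: "w \<bullet> w = 1"
  proof -
    have "(norm w)\<^sup>2 + (u \<bullet> v)\<^sup>2 = (norm u * norm v)\<^sup>2" unfolding w_def by (rule norm_cross_dot)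
    then show ?thesis using uu vv uv by (simp add: power2_norm_eq_inner power_mult_distrib)
  qed
  define F where "F y = (y$1) *\<^sub>R u + (y$2) *\<^sub>R v + (y$3) *\<^sub>R w" for y :: "real^3"
  have Fv: "v \<bullet> F y = y$2" for y unfolding F_def
    using vv uv wv by (simp add: inner_add_right inner_commute)
  have Fu: "u \<bullet> F y = y$1" for y unfolding F_def
    using uu uv wu by (simp add: inner_add_right inner_commute)
  have Fw: "w \<bullet> F y = y$3" for y unfolding F_def
    using ww wu wv by (simp add: inner_add_right inner_commute)
  have lin: "linear F"
    by (rule linearI) (simp_all add: F_def algebra_simps)
  have FF: "F y \<bullet> F y = y \<bullet> y" for y
  proof -
    have "F y \<bullet> F y = y$1 * (u \<bullet> F y) + y$2 * (v \<bullet> F y) + y$3 * (w \<bullet> F y)"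
      by (subst (1) F_def) (simp add: inner_add_left)
    also have "\<dots> = y$1 * y$1 + y$2 * y$2 + y$3 * y$3" by (simp only: Fu Fv Fw)
    also have "\<dots> = y \<bullet> y" by (simp add: inner3)
    finally show ?thesis .
  qed
  have ot: "orthogonal_transformation F"
    unfolding orthogonal_transformation using lin FF by (simp add: norm_eq_sqrt_inner)
  have n1F: "n1 \<bullet> F y = norm n1 * y$2" for y
  proof -
    have "n1 = norm n1 *\<^sub>R v" unfolding v_def using n10 by simp
    then have "n1 \<bullet> F y = norm n1 * (v \<bullet> F y)" by (metis inner_scaleR_left)
    then show ?thesis by (simp add: Fv)
  qed
  have n2F: "n2 \<bullet> F y = norm n2 * (sb * y$1 + cb * y$2)" for y
  proof -
    have "n2 = norm n2 *\<^sub>R h" unfolding h_def using n20 by simp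
    then have "n2 \<bullet> F y = norm n2 * (h \<bullet> F y)" by (metis inner_scaleR_left)
    also have "h \<bullet> F y = sb * y$1 + cb * y$2" unfolding hvec by (simp add: inner_add_left Fu Fv)
    finally show ?thesis .
  qed
  have nF: "norm (F y) = norm y" for y using ot orthogonal_transformation by blast
  have Wc: "y \<in> W r (pi - \<beta>) \<longleftrightarrow> norm y \<le> r \<and> y$2 \<ge> 0 \<and> sb * y$1 + cb * y$2 \<ge> 0" for y :: "real^3"
    unfolding W_def sb_def cb_def by (simp add: sin_diff cos_diff)
  have Lc: "F y \<in> cball 0 r \<inter> {x. n1 \<bullet> x \<ge> 0} \<inter> {x. n2 \<bullet> x \<ge> 0} \<longleftrightarrow> norm y \<le> r \<and> y$2 \<ge> 0 \<and> sb * y$1 + cb * y$2 \<ge> 0" for y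
    using n10 n20 by (simp add: n1F n2F nF zero_le_mult_iff)
  have im: "F ` W r (pi - \<beta>) = cball 0 r \<inter> {x. n1 \<bullet> x \<ge> 0} \<inter> {x. n2 \<bullet> x \<ge> 0}"
  proof (intro set_eqI iffI)
    fix x assume "x \<in> F ` W r (pi - \<beta>)"
    then obtain y where "y \<in> W r (pi - \<beta>)" "x = F y" by blast
    then show "x \<in> cball 0 r \<inter> {x. n1 \<bullet> x \<ge> 0} \<inter> {x. n2 \<bullet> x \<ge> 0}" using Wc Lc by blast
  next
    fix x assume x: "x \<in> cball 0 r \<inter> {x. n1 \<bullet> x \<ge> 0} \<inter> {x. n2 \<bullet> x \<ge> 0}"
    obtain y where y: "x = F y" using orthogonal_transformation_surj[OF ot] by (metis surjD)
    then have "y \<in> W r (pi - \<beta>)" using x Wc Lc by blast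
    then show "x \<in> F ` W r (pi - \<beta>)" using y by blast
  qed
  have "measure lebesgue (cball 0 r \<inter> {x. n1 \<bullet> x \<ge> 0} \<inter> {x. n2 \<bullet> x \<ge> 0}) = measure lebesgue (W r (pi - \<beta>))"
    unfolding im[symmetric] by (rule measure_orthogonal_image[OF ot W_meas])
  also have "\<dots> = 2/3 * r^3 * (pi - \<beta>)" using vp by (intro W_lin r) auto
  finally show ?thesis unfolding \<beta>_def .
qed

lemma cross_cross_cyc: "cross3 (cross3 R P) (cross3 P Q) = (P \<bullet> cross3 Q R) *\<^sub>R (P::real^3)"
  by (simp add: cross3_def inner3 vec_eq_iff forall_3 vector_3 algebra_simps)

lemma split_half2:
  fixes S :: "(real^3) set"
  assumes "compact S" "n \<noteq> 0" "A = S \<inter> {x. n \<bullet> x \<ge> 0}" "B = S \<inter> {x. n \<bullet> x \<le> 0}"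
  shows "measure lebesgue S = measure lebesgue A + measure lebesgue B"
  using split_half[OF assms(1,2)] assms(3,4) by simp

lemma girard:
  fixes P Q R :: "real^3"
  assumes D: "P \<bullet> cross3 Q R > 0" and r: "r \<ge> 0"
  shows "measure lebesgue (cball 0 r \<inter> {x. cross3 Q R \<bullet> x \<ge> 0} \<inter> {x. cross3 R P \<bullet> x \<ge> 0} \<inter> {x. cross3 P Q \<bullet> x \<ge> 0})
     = r^3/3 * (2*pi - (vec_angle (cross3 R P) (cross3 P Q) + vec_angle (cross3 P Q) (cross3 Q R) + vec_angle (cross3 Q R) (cross3 R P)))"
proof -
  define n1 where "n1 = cross3 Q R"
  define n2 where "n2 = cross3 R P"
  define n3 where "n3 = cross3 P Q"
  have D2: "Q \<bullet> cross3 R P = P \<bullet> cross3 Q R" by (simp add: cross3_def inner3 vector_3 algebra_simps)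
  have D3: "R \<bullet> cross3 P Q = P \<bullet> cross3 Q R" by (simp add: cross3_def inner3 vector_3 algebra_simps)
  have P0: "P \<noteq> 0" and Q0: "Q \<noteq> 0" and R0: "R \<noteq> 0" and n10: "n1 \<noteq> 0" and n20: "n2 \<noteq> 0" and n30: "n3 \<noteq> 0"
    using D D2 D3 by (auto simp: n1_def n2_def n3_def)
  have c23: "cross3 n2 n3 \<noteq> 0" unfolding n2_def n3_def cross_cross_cyc using D P0 by simp
  have c31: "cross3 n3 n1 \<noteq> 0" unfolding n3_def n1_def cross_cross_cyc using D D2 Q0 by simp
  have c12: "cross3 n1 n2 \<noteq> 0" unfolding n1_def n2_def cross_cross_cyc using D D3 R0 by simp
  define B where "B = cball (0::real^3) r"
  define H where "H n = {x::real^3. n \<bullet> x \<ge> 0}" for n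
  define H' where "H' n = {x::real^3. n \<bullet> x \<le> 0}" for n
  have cB: "compact B" unfolding B_def by simp
  have cH: "compact (S \<inter> H n)" "compact (S \<inter> H' n)" if "compact S" for S n
    unfolding H_def H'_def using that by (auto intro: compact_half compact_half')
  define V where "V = B \<inter> H n1 \<inter> H n2 \<inter> H n3"
  define X1 where "X1 = B \<inter> H n2 \<inter> H n3 \<inter> H' n1"
  define X2 where "X2 = B \<inter> H n3 \<inter> H n1 \<inter> H' n2"
  define X3 where "X3 = B \<inter> H n1 \<inter> H n2 \<inter> H' n3"
  define Y where "Y = B \<inter> H n1 \<inter> H' n2 \<inter> H' n3"
  have LP: "measure lebesgue (B \<inter> H n2 \<inter> H n3) = measure lebesgue V + measure lebesgue X1"
    by (rule split_half2[OF _ n10]) (auto simp: V_def X1_def H_def H'_def intro!: compact_half compact_half' cB)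
  have LQ: "measure lebesgue (B \<inter> H n3 \<inter> H n1) = measure lebesgue V + measure lebesgue X2"
    by (rule split_half2[OF _ n20]) (auto simp: V_def X2_def H_def H'_def intro!: compact_half compact_half' cB)
  have LR: "measure lebesgue (B \<inter> H n1 \<inter> H n2) = measure lebesgue V + measure lebesgue X3"
    by (rule split_half2[OF _ n30]) (auto simp: V_def X3_def H_def H'_def intro!: compact_half compact_half' cB)
  have H1: "measure lebesgue (B \<inter> H n1) = measure lebesgue (B \<inter> H n1 \<inter> H n2) + measure lebesgue (B \<inter> H n1 \<inter> H' n2)"
    by (rule split_half2[OF _ n20]) (auto simp: H_def H'_def intro!: compact_half compact_half' cB)
  have H2: "measure lebesgue (B \<inter> H n1 \<inter> H' n2) = measure lebesgue X2 + measure lebesgue Y"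
    by (rule split_half2[OF _ n30]) (auto simp: X2_def Y_def H_def H'_def intro!: compact_half compact_half' cB)
  have ot: "orthogonal_transformation (uminus :: real^3 \<Rightarrow> real^3)"
    by (simp add: orthogonal_transformation linear_uminus)
  have imY: "uminus ` X1 = Y"
    unfolding X1_def Y_def B_def H_def H'_def
    by (auto simp: image_iff intro!: bexI[where x="- _"])
  have cX1: "compact X1" unfolding X1_def by (intro cH cB)
  have mY: "measure lebesgue Y = measure lebesgue X1"
    unfolding imY[symmetric] by (rule measure_orthogonal_image[OF ot lmeasurable_compact[OF cX1]])
  have lP: "measure lebesgue (B \<inter> H n2 \<inter> H n3) = 2/3 * r^3 * (pi - vec_angle n2 n3)"
    unfolding B_def H_def by (rule lune[OF c23 r])
  have lQ: "measure lebesgue (B \<inter> H n3 \<inter> H n1) = 2/3 * r^3 * (pi - vec_angle n3 n1)"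
    unfolding B_def H_def by (rule lune[OF c31 r])
  have lR: "measure lebesgue (B \<inter> H n1 \<inter> H n2) = 2/3 * r^3 * (pi - vec_angle n1 n2)"
    unfolding B_def H_def by (rule lune[OF c12 r])
  have hb: "measure lebesgue (B \<inter> H n1) = 2/3 * r^3 * pi"
    unfolding B_def H_def by (rule half_ball[OF n10 r])
  have "measure lebesgue V = r^3/3 * (2*pi - (vec_angle n2 n3 + vec_angle n3 n1 + vec_angle n1 n2))"
  proof -
    have e: "measure lebesgue V = (measure lebesgue (B \<inter> H n2 \<inter> H n3) + measure lebesgue (B \<inter> H n3 \<inter> H n1)
       + measure lebesgue (B \<inter> H n1 \<inter> H n2) - measure lebesgue (B \<inter> H n1)) / 2"
      using LP LQ LR H1 H2 mY by (simp add: field_simps)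
    show ?thesis unfolding e lP lQ lR hb by (simp add: algebra_simps divide_simps)
  qed
  then show ?thesis unfolding V_def B_def H_def n1_def n2_def n3_def by (simp add: Int_assoc)
qed

lemma lagrange3: "cross3 x y \<bullet> cross3 z w = (x \<bullet> z) * (y \<bullet> w) - (x \<bullet> w) * (y \<bullet> (z::real^3))"
  by (simp add: cross3_def inner3 vector_3 algebra_simps)

lemma det_cyc1: "Q \<bullet> cross3 R P = P \<bullet> cross3 Q (R::real^3)"
  by (simp add: cross3_def inner3 vector_3 algebra_simps)
lemma det_cyc2: "R \<bullet> cross3 P Q = P \<bullet> cross3 Q (R::real^3)"
  by (simp add: cross3_def inner3 vector_3 algebra_simps)

lemma gram3: "(p \<bullet> cross3 q r)^2 = (p\<bullet>p)*(q\<bullet>q)*(r\<bullet>r) + 2*(p\<bullet>q)*(q\<bullet>r)*(r\<bullet>p)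
   - (p\<bullet>p)*(q\<bullet>r)^2 - (q\<bullet>q)*(r\<bullet>p)^2 - (r\<bullet>r)*(p\<bullet>(q::real^3))^2"
  unfolding cross3_def inner3 vector_3 by algebra

lemma cis_va:
  assumes "cross3 x y \<noteq> 0"
  shows "cis (vec_angle x y) = complex_of_real (1 / (norm x * norm y)) * Complex (x \<bullet> y) (norm (cross3 x y))"
  using va_props[OF assms] by (simp add: cis.ctr complex_eq_iff)

lemma poly_id:
  fixes a b c D :: real
  assumes "D^2 = 1 - a^2 - b^2 - c^2 + 2*a*b*c"
  shows "Complex (b*c-a) D * Complex (a*b-c) D * Complex (a*c-b) D
       = complex_of_real ((1-a)*(1-b)*(1-c)/2) * (cnj (Complex (1+a+b+c) D))^2"
proof -
  have i1: "(b*c-a)*(a*b-c) + (a*b-c)*(a*c-b) + (a*c-b)*(b*c-a) - D^2 = -2 * ((1-a)*(1-b)*(1-c)/2) * (1+a+b+c)"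
    using assms by algebra
  have i2: "((b*c-a)*(a*b-c)*(a*c-b) - D^2 * ((b*c-a)+(a*b-c)+(a*c-b))) * 2 = ((1-a)*(1-b)*(1-c)) * ((1+a+b+c)^2 - D^2)"
    using assms by algebra
  show ?thesis
  proof (rule complex_eqI)
    show "Re (Complex (b*c-a) D * Complex (a*b-c) D * Complex (a*c-b) D) =
      Re (complex_of_real ((1-a)*(1-b)*(1-c)/2) * (cnj (Complex (1+a+b+c) D))^2)"
      using i2 by (simp add: power2_eq_square algebra_simps)
    show "Im (Complex (b*c-a) D * Complex (a*b-c) D * Complex (a*c-b) D) =
      Im (complex_of_real ((1-a)*(1-b)*(1-c)/2) * (cnj (Complex (1+a+b+c) D))^2)"
    proof -
      have "Im (Complex (b*c-a) D * Complex (a*b-c) D * Complex (a*c-b) D) = D * ((b*c-a)*(a*b-c) + (a*b-c)*(a*c-b) + (a*c-b)*(b*c-a) - D^2)"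
        by (simp add: power2_eq_square algebra_simps)
      also have "\<dots> = D * (-2 * ((1-a)*(1-b)*(1-c)/2) * (1+a+b+c))" using i1 by simp
      also have "\<dots> = Im (complex_of_real ((1-a)*(1-b)*(1-c)/2) * (cnj (Complex (1+a+b+c) D))^2)"
        by (simp add: power2_eq_square algebra_simps)
      finally show ?thesis .
    qed
  qed
qed

lemma lt1:
  fixes a b c D :: real
  assumes "D^2 = 1 - a^2 - b^2 - c^2 + 2*a*b*c" "D > 0" "a \<le> 1"
  shows "a < 1"
proof (rule ccontr)
  assume "\<not> a < 1"
  then have "a = 1" using assms by simp
  then have "D^2 = -((b - c)^2)" using assms(1) by (simp add: power2_eq_square algebra_simps)
  moreover have "D^2 > 0" using assms(2) by simp
  ultimately show False by (smt (verit) zero_le_power2)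
qed

lemma angle_sum:
  fixes p q r :: "real^3"
  assumes np: "norm p = 1" and nq: "norm q = 1" and nr: "norm r = 1" and D: "p \<bullet> cross3 r q > 0"
  shows "\<exists>l>0. cis (vec_angle (cross3 q p) (cross3 p r) + vec_angle (cross3 p r) (cross3 r q) + vec_angle (cross3 r q) (cross3 q p))
     = complex_of_real l * (cnj (Complex (1 + q \<bullet> r + r \<bullet> p + p \<bullet> q) (p \<bullet> cross3 r q)))^2"
proof -
  define D where "D = p \<bullet> cross3 r q"
  define a where "a = q \<bullet> r"
  define b where "b = r \<bullet> p"
  define c where "c = p \<bullet> q"
  have pp: "p \<bullet> p = 1" and qq: "q \<bullet> q = 1" and rr: "r \<bullet> r = 1"
    using np nq nr by (simp_all add: norm_eq_sqrt_inner)
  have d2: "r \<bullet> cross3 q p = D" and d3: "q \<bullet> cross3 p r = D"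
    unfolding D_def by (simp_all add: cross3_def inner3 vector_3 algebra_simps)
  have c1: "cross3 (cross3 q p) (cross3 p r) = D *\<^sub>R p" unfolding D_def by (rule cross_cross_cyc)
  have c2: "cross3 (cross3 p r) (cross3 r q) = D *\<^sub>R r" using cross_cross_cyc[of p r q] d2 by simp
  have c3: "cross3 (cross3 r q) (cross3 q p) = D *\<^sub>R q" using cross_cross_cyc[of r q p] d3 by simp
  have D0: "D > 0" using D by (simp add: D_def)
  have p0: "p \<noteq> 0" and q0: "q \<noteq> 0" and r0: "r \<noteq> 0" using np nq nr by auto
  have nz1: "cross3 (cross3 q p) (cross3 p r) \<noteq> 0" unfolding c1 using D0 p0 by simp
  have nz2: "cross3 (cross3 p r) (cross3 r q) \<noteq> 0" unfolding c2 using D0 r0 by simp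
  have nz3: "cross3 (cross3 r q) (cross3 q p) \<noteq> 0" unfolding c3 using D0 q0 by simp
  have e1: "cis (vec_angle (cross3 q p) (cross3 p r)) = complex_of_real (1 / (norm (cross3 q p) * norm (cross3 p r))) * Complex (b*c - a) D"
    unfolding cis_va[OF nz1] c1 using D0 np pp
    by (simp add: lagrange3 a_def b_def c_def inner_commute mult.commute)
  have e2: "cis (vec_angle (cross3 p r) (cross3 r q)) = complex_of_real (1 / (norm (cross3 p r) * norm (cross3 r q))) * Complex (a*b - c) D"
    unfolding cis_va[OF nz2] c2 using D0 nr rr
    by (simp add: lagrange3 a_def b_def c_def inner_commute mult.commute)
  have e3: "cis (vec_angle (cross3 r q) (cross3 q p)) = complex_of_real (1 / (norm (cross3 r q) * norm (cross3 q p))) * Complex (a*c - b) D"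
    unfolding cis_va[OF nz3] c3 using D0 nq qq
    by (simp add: lagrange3 a_def b_def c_def inner_commute mult.commute)
  have gram: "D^2 = 1 - a^2 - b^2 - c^2 + 2*a*b*c"
    unfolding D_def a_def b_def c_def using gram3[of p r q] pp qq rr
    by (simp add: inner_commute algebra_simps)
  have a1: "a \<le> 1" unfolding a_def using norm_cauchy_schwarz[of q r] nq nr by simp
  have b1: "b \<le> 1" unfolding b_def using norm_cauchy_schwarz[of r p] np nr by simp
  have c1': "c \<le> 1" unfolding c_def using norm_cauchy_schwarz[of p q] np nq by simp
  have al: "a < 1" by (rule lt1[OF gram D0 a1])
  have bl: "b < 1" by (rule lt1[of D b a c]) (use gram D0 b1 in \<open>simp_all add: algebra_simps\<close>)
  have cl: "c < 1" by (rule lt1[of D c b a]) (use gram D0 c1' in \<open>simp_all add: algebra_simps\<close>)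
  define k where "k = 1 / (norm (cross3 q p) * norm (cross3 p r)) * (1 / (norm (cross3 p r) * norm (cross3 r q))) * (1 / (norm (cross3 r q) * norm (cross3 q p)))"
  have n1: "cross3 q p \<noteq> 0" "cross3 p r \<noteq> 0" "cross3 r q \<noteq> 0" using nz1 nz2 by auto
  have k0: "k > 0" unfolding k_def using n1 by simp
  have "cis (vec_angle (cross3 q p) (cross3 p r) + vec_angle (cross3 p r) (cross3 r q) + vec_angle (cross3 r q) (cross3 q p))
     = cis (vec_angle (cross3 q p) (cross3 p r)) * cis (vec_angle (cross3 p r) (cross3 r q)) * cis (vec_angle (cross3 r q) (cross3 q p))"
    by (simp add: cis_mult)
  also have "\<dots> = complex_of_real k * (Complex (b*c - a) D * Complex (a*b - c) D * Complex (a*c - b) D)"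
    unfolding e1 e2 e3 k_def by (simp add: algebra_simps)
  also have "\<dots> = complex_of_real (k * ((1-a)*(1-b)*(1-c)/2)) * (cnj (Complex (1+a+b+c) D))^2"
    unfolding poly_id[OF gram] by (simp add: algebra_simps)
  finally have "cis (vec_angle (cross3 q p) (cross3 p r) + vec_angle (cross3 p r) (cross3 r q) + vec_angle (cross3 r q) (cross3 q p))
     = complex_of_real (k * ((1-a)*(1-b)*(1-c)/2)) * (cnj (Complex (1 + q \<bullet> r + r \<bullet> p + p \<bullet> q) (p \<bullet> cross3 r q)))^2"
    by (simp add: a_def b_def c_def D_def)
  moreover have "k * ((1-a)*(1-b)*(1-c)/2) > 0" using k0 al bl cl by simp
  ultimately show ?thesis by blast
qed

lemma cramer3: "(P \<bullet> cross3 Q R) *\<^sub>R x = (cross3 Q R \<bullet> x) *\<^sub>R P + (cross3 R P \<bullet> x) *\<^sub>R Q + (cross3 P Q \<bullet> (x::real^3)) *\<^sub>R R"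
  by (simp add: cross3_def inner3 vector_3 vec_eq_iff forall_3 algebra_simps)

lemma cone_char:
  fixes P Q R :: "real^3"
  assumes D: "P \<bullet> cross3 Q R > 0"
  shows "(\<exists>u v w. u \<ge> 0 \<and> v \<ge> 0 \<and> w \<ge> 0 \<and> x = u *\<^sub>R P + v *\<^sub>R Q + w *\<^sub>R R) \<longleftrightarrow>
     (cross3 Q R \<bullet> x \<ge> 0 \<and> cross3 R P \<bullet> x \<ge> 0 \<and> cross3 P Q \<bullet> x \<ge> 0)"
proof
  assume "\<exists>u v w. u \<ge> 0 \<and> v \<ge> 0 \<and> w \<ge> 0 \<and> x = u *\<^sub>R P + v *\<^sub>R Q + w *\<^sub>R R"
  then obtain u v w where uvw: "u \<ge> 0" "v \<ge> 0" "w \<ge> 0" "x = u *\<^sub>R P + v *\<^sub>R Q + w *\<^sub>R R" by blast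
  have d1: "cross3 Q R \<bullet> P = P \<bullet> cross3 Q R" by (simp add: inner_commute)
  have d2: "cross3 R P \<bullet> Q = P \<bullet> cross3 Q R" by (simp add: cross3_def inner3 vector_3 algebra_simps)
  have d3: "cross3 P Q \<bullet> R = P \<bullet> cross3 Q R" by (simp add: cross3_def inner3 vector_3 algebra_simps)
  have "cross3 Q R \<bullet> x = u * (P \<bullet> cross3 Q R)" "cross3 R P \<bullet> x = v * (P \<bullet> cross3 Q R)" "cross3 P Q \<bullet> x = w * (P \<bullet> cross3 Q R)"
    unfolding uvw(4) using d1 d2 d3 by (simp_all add: inner_add_right dot_cross_self)
  then show "cross3 Q R \<bullet> x \<ge> 0 \<and> cross3 R P \<bullet> x \<ge> 0 \<and> cross3 P Q \<bullet> x \<ge> 0" using uvw D by simp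
next
  assume h: "cross3 Q R \<bullet> x \<ge> 0 \<and> cross3 R P \<bullet> x \<ge> 0 \<and> cross3 P Q \<bullet> x \<ge> 0"
  define d where "d = P \<bullet> cross3 Q R"
  have "x = (1/d) *\<^sub>R (d *\<^sub>R x)" using D by (simp add: d_def)
  also have "\<dots> = ((cross3 Q R \<bullet> x)/d) *\<^sub>R P + ((cross3 R P \<bullet> x)/d) *\<^sub>R Q + ((cross3 P Q \<bullet> x)/d) *\<^sub>R R"
    unfolding d_def cramer3 by (simp add: scaleR_add_right divide_inverse_commute)
  finally show "\<exists>u v w. u \<ge> 0 \<and> v \<ge> 0 \<and> w \<ge> 0 \<and> x = u *\<^sub>R P + v *\<^sub>R Q + w *\<^sub>R R"
    using h D d_def by (intro exI[of _ "(cross3 Q R \<bullet> x)/d"] exI[of _ "(cross3 R P \<bullet> x)/d"] exI[of _ "(cross3 P Q \<bullet> x)/d"]) auto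
qed

lemma sph_area_tri:
  fixes P Q R :: "real^3"
  assumes D: "P \<bullet> cross3 Q R > 0" and r: "r > 0"
  shows "sph_area r (sph_triangle r P Q R) =
     r^2 * (2*pi - (vec_angle (cross3 R P) (cross3 P Q) + vec_angle (cross3 P Q) (cross3 Q R) + vec_angle (cross3 Q R) (cross3 R P)))"
proof -
  define K where "K = cball 0 r \<inter> {x. cross3 Q R \<bullet> x \<ge> 0} \<inter> {x. cross3 R P \<bullet> x \<ge> 0} \<inter> {x::real^3. cross3 P Q \<bullet> x \<ge> 0}"
  have S: "sph_triangle r P Q R = {x. norm x = r \<and> cross3 Q R \<bullet> x \<ge> 0 \<and> cross3 R P \<bullet> x \<ge> 0 \<and> cross3 P Q \<bullet> x \<ge> 0}"
    unfolding sph_triangle_def using cone_char[OF D] by blast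
  have P0: "P \<noteq> 0" using D by auto
  have nx0: "norm ((r / norm P) *\<^sub>R P) = r" using P0 r by simp
  have x0: "(r / norm P) *\<^sub>R P \<in> sph_triangle r P Q R"
  proof -
    have "r / norm P \<ge> 0" using r by simp
    then have "\<exists>u v w. u \<ge> 0 \<and> v \<ge> 0 \<and> w \<ge> 0 \<and> (r / norm P) *\<^sub>R P = u *\<^sub>R P + v *\<^sub>R Q + w *\<^sub>R R"
      by (intro exI[of _ "r / norm P"] exI[of _ "0::real"]) simp
    then show ?thesis unfolding sph_triangle_def using nx0 by blast
  qed
  have T: "{t *\<^sub>R x |t x. 0 \<le> t \<and> t \<le> 1 \<and> x \<in> sph_triangle r P Q R} = K"
  proof (intro set_eqI iffI)
    fix y assume "y \<in> {t *\<^sub>R x |t x. 0 \<le> t \<and> t \<le> 1 \<and> x \<in> sph_triangle r P Q R}"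
    then obtain t x where tx: "y = t *\<^sub>R x" "0 \<le> t" "t \<le> 1" "x \<in> sph_triangle r P Q R" by blast
    have nx: "norm x = r" using tx(4) S by auto
    have "norm y \<le> r" using tx(1,2,3) nx r mult_left_le_one_le[of r t] by simp
    then show "y \<in> K" using tx S unfolding K_def by auto
  next
    fix y assume y: "y \<in> K"
    show "y \<in> {t *\<^sub>R x |t x. 0 \<le> t \<and> t \<le> 1 \<and> x \<in> sph_triangle r P Q R}"
    proof (cases "y = 0")
      case True
      have "y = 0 *\<^sub>R ((r / norm P) *\<^sub>R P)" using True by simp
      then show ?thesis using x0 by (intro CollectI exI[of _ "0::real"] exI[of _ "(r / norm P) *\<^sub>R P"]) simp
    next
      case False
      define x where "x = (r / norm y) *\<^sub>R y"
      have "y = (norm y / r) *\<^sub>R x" unfolding x_def using False r by simp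
      moreover have "x \<in> sph_triangle r P Q R" unfolding S x_def using y r False unfolding K_def by auto
      moreover have "norm y / r \<le> 1" using y r unfolding K_def by auto
      moreover have "norm y / r \<ge> 0" using r by simp
      ultimately show ?thesis by (intro CollectI exI[of _ "norm y / r"] exI[of _ x]) auto
    qed
  qed
  show ?thesis
    unfolding sph_area_def T K_def girard[OF D less_imp_le[OF r]] using r
    by (simp add: power2_eq_square power3_eq_cube)
qed

lemma norm2_comb: "(norm (u *\<^sub>R x + w *\<^sub>R y))^2 = u^2 * (x \<bullet> x) + 2 * u * w * (x \<bullet> y) + w^2 * (y \<bullet> (y::real^3))"
  unfolding power2_norm_eq_inner by (simp add: inner_add_left inner_add_right inner_commute power2_eq_square algebra_simps)

lemma inertia_alg:
  fixes m1 m2 m3 X Y Z :: real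
  assumes "m1 > 0" "m2 > 0" "m1 + m2 + m3 = 1"
  shows "m1 * ((- m2 / m1)^2 * X + 2 * (- m2 / m1) * (- m3 / m1) * Z + (- m3 / m1)^2 * Y) + m2 * X + m3 * Y
    = (m1 * m2 / (m1 + m2)) * (((m1 + m2) / m1)^2 * X + 2 * ((m1 + m2) / m1) * (m3 / m1) * Z + (m3 / m1)^2 * Y) + (m3 / (m1 + m2)) * Y"
proof -
  define i1 where "i1 = 1 / m1"
  define i2 where "i2 = 1 / (m1 + m2)"
  have h1: "m1 * i1 = 1" and h2: "(m1 + m2) * i2 = 1" using assms by (auto simp: i1_def i2_def)
  have e: "\<And>u. u / m1 = u * i1" "\<And>u. u / (m1 + m2) = u * i2" by (simp_all add: i1_def i2_def)
  show ?thesis unfolding e using h1 h2 assms(3) by algebra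
qed

lemma a1_eq:
  assumes "m 1 > 0" "is_mtriangle m a"
  shows "a 1 = (- m 2 / m 1) *\<^sub>R a 2 + (- m 3 / m 1) *\<^sub>R a 3"
proof -
  have h: "m 1 *\<^sub>R a 1 + m 2 *\<^sub>R a 2 + m 3 *\<^sub>R a 3 = 0" using assms(2) unfolding is_mtriangle_def .
  have "m 1 *\<^sub>R a 1 = (m 1 *\<^sub>R a 1 + m 2 *\<^sub>R a 2 + m 3 *\<^sub>R a 3) - (m 2 *\<^sub>R a 2 + m 3 *\<^sub>R a 3)" by (simp add: algebra_simps)
  then have "m 1 *\<^sub>R a 1 = - (m 2 *\<^sub>R a 2 + m 3 *\<^sub>R a 3)" unfolding h by simp
  then have "a 1 = (1 / m 1) *\<^sub>R (- (m 2 *\<^sub>R a 2 + m 3 *\<^sub>R a 3))" using assms(1)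
    by (metis (no_types, lifting) divide_self_if less_irrefl scaleR_one scaleR_scaleR times_divide_eq_left mult_1)
  then show ?thesis by (simp add: scaleR_add_right algebra_simps)
qed

lemma jac2_c:
  assumes m: "m 1 > 0" "m 2 > 0" "m 3 > 0" "m 1 + m 2 + m 3 = 1" and t: "is_mtriangle m a"
  shows "jacobi2 m a = sqrt (m 3 / (m 1 + m 2)) *\<^sub>R a 3"
proof -
  have h: "m 1 *\<^sub>R a 1 + m 2 *\<^sub>R a 2 + m 3 *\<^sub>R a 3 = 0" using t unfolding is_mtriangle_def .
  have "m 1 *\<^sub>R a 1 + m 2 *\<^sub>R a 2 = (m 1 *\<^sub>R a 1 + m 2 *\<^sub>R a 2 + m 3 *\<^sub>R a 3) - m 3 *\<^sub>R a 3" by simp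
  then have "m 1 *\<^sub>R a 1 + m 2 *\<^sub>R a 2 = - (m 3 *\<^sub>R a 3)" unfolding h by simp
  then have "a 3 - (1 / (m 1 + m 2)) *\<^sub>R (m 1 *\<^sub>R a 1 + m 2 *\<^sub>R a 2) = (1 + m 3 / (m 1 + m 2)) *\<^sub>R a 3"
    by (simp add: algebra_simps)
  also have "1 + m 3 / (m 1 + m 2) = 1 / (m 1 + m 2)" using m by (simp add: field_simps)
  finally have e: "a 3 - (1 / (m 1 + m 2)) *\<^sub>R (m 1 *\<^sub>R a 1 + m 2 *\<^sub>R a 2) = (1 / (m 1 + m 2)) *\<^sub>R a 3" .
  have s: "sqrt ((m 1 + m 2) * m 3) * (1 / (m 1 + m 2)) = sqrt (m 3 / (m 1 + m 2))"
  proof -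
    have "sqrt ((m 1 + m 2) * m 3) = sqrt (m 3 / (m 1 + m 2)) * (m 1 + m 2)"
    proof -
      have eq: "(m 1 + m 2) * m 3 = (m 3 / (m 1 + m 2)) * (m 1 + m 2)^2" using m by (simp add: field_simps power2_eq_square)
      have "sqrt ((m 1 + m 2) * m 3) = sqrt ((m 3 / (m 1 + m 2)) * (m 1 + m 2)^2)" by (simp only: eq)
      also have "\<dots> = sqrt (m 3 / (m 1 + m 2)) * sqrt ((m 1 + m 2)^2)" by (rule real_sqrt_mult)
      also have "\<dots> = sqrt (m 3 / (m 1 + m 2)) * (m 1 + m 2)" using m by simp
      finally show ?thesis .
    qed
    then show ?thesis using m by simp
  qed
  show ?thesis unfolding jacobi2_def e using s by simp
qed

lemma inertia_c:
  assumes m: "m 1 > 0" "m 2 > 0" "m 3 > 0" "m 1 + m 2 + m 3 = 1" and t: "is_mtriangle m a"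
  shows "inertia m a = (norm (jacobi1 m a))^2 + (norm (jacobi2 m a))^2"
proof -
  define x where "x = a 2"
  define y where "y = a 3"
  have a1: "a 1 = (- m 2 / m 1) *\<^sub>R x + (- m 3 / m 1) *\<^sub>R y" unfolding x_def y_def by (rule a1_eq[OF m(1) t])
  have d0: "a 2 - a 1 = (1 + m 2 / m 1) *\<^sub>R x + (m 3 / m 1) *\<^sub>R y"
    unfolding a1 x_def by (simp add: algebra_simps)
  have "1 + m 2 / m 1 = (m 1 + m 2) / m 1" using m(1) by (simp add: field_simps)
  with d0 have d: "a 2 - a 1 = ((m 1 + m 2) / m 1) *\<^sub>R x + (m 3 / m 1) *\<^sub>R y" by simp
  have j1: "(norm (jacobi1 m a))^2 = (m 1 * m 2 / (m 1 + m 2)) * (norm (a 2 - a 1))^2"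
    unfolding jacobi1_def using m by (simp add: power_mult_distrib)
  have j2: "(norm (jacobi2 m a))^2 = (m 3 / (m 1 + m 2)) * (y \<bullet> y)"
    unfolding jac2_c[OF m t] y_def using m by (simp add: power_mult_distrib power2_norm_eq_inner)
  have n1: "(norm (a 1))^2 = (- m 2 / m 1)^2 * (x \<bullet> x) + 2 * (- m 2 / m 1) * (- m 3 / m 1) * (x \<bullet> y) + (- m 3 / m 1)^2 * (y \<bullet> y)"
    unfolding a1 by (rule norm2_comb)
  have n21: "(norm (a 2 - a 1))^2 = ((m 1 + m 2) / m 1)^2 * (x \<bullet> x) + 2 * ((m 1 + m 2) / m 1) * (m 3 / m 1) * (x \<bullet> y) + (m 3 / m 1)^2 * (y \<bullet> y)"
    unfolding d by (rule norm2_comb)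
  have m3: "m 3 = 1 - m 1 - m 2" using m by simp
  have "inertia m a = m 1 * (norm (a 1))^2 + m 2 * (x \<bullet> x) + m 3 * (y \<bullet> y)"
    unfolding inertia_def x_def y_def by (simp add: power2_norm_eq_inner)
  also have "\<dots> = (m 1 * m 2 / (m 1 + m 2)) * (norm (a 2 - a 1))^2 + (m 3 / (m 1 + m 2)) * (y \<bullet> y)"
    unfolding n1 n21 by (rule inertia_alg[OF m(1,2,4)])
  finally show ?thesis using j1 j2 by simp
qed

lemma the_shape:
  assumes "\<forall>a'. C a' \<longrightarrow> shape m a' = p0" and "C a0"
  shows "(THE p. \<forall>a'. C a' \<longrightarrow> shape m a' = p) = p0"
proof (rule the_equality)
  show "\<forall>a'. C a' \<longrightarrow> shape m a' = p0" by fact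
next
  fix p assume "\<forall>a'. C a' \<longrightarrow> shape m a' = p"
  then have "shape m a0 = p" using assms(2) by blast
  moreover have "shape m a0 = p0" using assms by blast
  ultimately show "p = p0" by simp
qed

lemma shape_eq: "shape m a = (1 / inertia m a) *\<^sub>R vector [((norm (jacobi1 m a))\<^sup>2 - (norm (jacobi2 m a))\<^sup>2) / 2,
   jacobi1 m a \<bullet> jacobi2 m a, norm (cross3 (jacobi1 m a) (jacobi2 m a))]"
  unfolding shape_def Let_def ..

lemma vec3_eq: "(v::real^3) = vector [x, y, z] \<longleftrightarrow> v$1 = x \<and> v$2 = y \<and> v$3 = z"
  by (simp add: vec_eq_iff forall_3 vector_3)

lemma bc12:
  assumes m: "m 1 > 0" "m 2 > 0" "m 3 > 0" "m 1 + m 2 + m 3 = 1"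
  shows "binary_collision m 1 2 = vector [-1/2, 0, 0]"
  unfolding binary_collision_def
proof (rule the_shape)
  show "\<forall>a'. is_mtriangle m a' \<and> a' 1 = a' 2 \<and> inertia m a' \<noteq> 0 \<longrightarrow> shape m a' = vector [-1/2, 0, 0]"
  proof (intro allI impI)
    fix a' assume h: "is_mtriangle m a' \<and> a' 1 = a' 2 \<and> inertia m a' \<noteq> 0"
    have j1: "jacobi1 m a' = 0" unfolding jacobi1_def using h by simp
    have I: "inertia m a' = (norm (jacobi2 m a'))\<^sup>2" using inertia_c[OF m] h j1 by simp
    show "shape m a' = vector [-1/2, 0, 0]"
      unfolding shape_eq j1 using h I by (simp add: vec3_eq vector_3)
  qed
next
  define e :: "real^3" where "e = axis 1 1"
  define a0 where "a0 = (\<lambda>i::nat. if i = 3 then (- (m 1 + m 2) / m 3) *\<^sub>R e else e)"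
  have ne: "norm e = 1" unfolding e_def by simp
  have t: "is_mtriangle m a0"
  proof -
    have "m 3 *\<^sub>R ((- (m 1 + m 2) / m 3) *\<^sub>R e) = (- (m 1 + m 2)) *\<^sub>R e" using m by simp
    moreover have "a0 1 = e" "a0 2 = e" "a0 3 = (- (m 1 + m 2) / m 3) *\<^sub>R e" by (simp_all add: a0_def)
    moreover have "m 1 *\<^sub>R e + m 2 *\<^sub>R e + (- (m 1 + m 2)) *\<^sub>R e = (m 1 + m 2 + (- (m 1 + m 2))) *\<^sub>R e"
      by (simp only: scaleR_add_left)
    ultimately show ?thesis unfolding is_mtriangle_def using m(3) by simp
  qed
  have "inertia m a0 = m 1 + m 2 + m 3 * ((m 1 + m 2) / m 3)^2"
    unfolding inertia_def a0_def using ne m by (simp add: power_mult_distrib abs_of_pos)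
  moreover have "m 1 + m 2 + m 3 * ((m 1 + m 2) / m 3)^2 > 0" using m by (intro add_pos_nonneg) auto
  ultimately show "is_mtriangle m a0 \<and> a0 1 = a0 2 \<and> inertia m a0 \<noteq> 0" using t by (simp add: a0_def)
qed

lemma ratio_cancel1: "(K::real) \<noteq> 0 \<Longrightarrow> (c1 * K) / 2 / (c2 * K) = c1 / (2 * c2)"
proof -
  assume K: "K \<noteq> 0"
  have "(c1 * K) / 2 / (c2 * K) = (c1 * K) / ((2 * c2) * K)" by (simp add: divide_divide_eq_left mult.assoc)
  also have "\<dots> = c1 / (2 * c2)" using K by (rule nonzero_mult_divide_mult_cancel_right)
  finally show ?thesis .
qed

lemma ratio_cancel2: "(K::real) \<noteq> 0 \<Longrightarrow> (c1 * K) / (c2 * K) = c1 / c2"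
  by (rule nonzero_mult_divide_mult_cancel_right)

lemma bc31_alg:
  fixes m1 m2 m3 A B S X :: real
  assumes m: "m1 > 0" "m2 > 0" "m3 > 0" and A: "A^2 = m1 * m2 / (m1 + m2)" and B: "B^2 = m3 / (m1 + m2)"
    and AB: "A * B = S / (m1 + m2)" and X: "X > 0"
  shows "((A / m2)^2 * X - B^2 * X) / 2 / ((A / m2)^2 * X + B^2 * X) = (m1 - m2 * m3) / (2 * (m1 + m2 * m3))"
    and "(- A / m2) * B * X / ((A / m2)^2 * X + B^2 * X) = - S / (m1 + m2 * m3)"
proof -
  have mu: "m1 + m2 > 0" using m by simp
  have q: "m1 + m2 * m3 > 0" using m by (simp add: add_pos_pos)
  define i where "i = 1 / (m1 + m2)"
  define j where "j = 1 / m2"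
  have i0: "i > 0" and j0: "j > 0" using m mu by (simp_all add: i_def j_def)
  have hi: "(m1 + m2) * i = 1" and hj: "m2 * j = 1" using m mu by (simp_all add: i_def j_def)
  have A': "A^2 = m1 * m2 * i" using A by (simp add: i_def)
  have B': "B^2 = m3 * i" using B by (simp add: i_def)
  have AB': "A * B = S * i" using AB by (simp add: i_def)
  have dv: "\<And>u. u / m2 = u * j" by (simp add: j_def)
  have den: "(A / m2)^2 * X + B^2 * X = ((m1 + m2 * m3) * (i * j)) * X"
    unfolding dv using A' B' hj by algebra
  have num1: "(A / m2)^2 * X - B^2 * X = ((m1 - m2 * m3) * (i * j)) * X"
    unfolding dv using A' B' hj by algebra
  have num2: "(- A / m2) * B * X = (- S * (i * j)) * X"
    unfolding dv using AB' by algebra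
  have ij: "i * j > 0" using i0 j0 by simp
  define K where "K = (i * j) * X"
  have K0: "K > 0" unfolding K_def using ij X by simp
  have den': "(A / m2)^2 * X + B^2 * X = (m1 + m2 * m3) * K" unfolding den K_def by simp
  have num1': "(A / m2)^2 * X - B^2 * X = (m1 - m2 * m3) * K" unfolding num1 K_def by simp
  have num2': "(- A / m2) * B * X = (- S) * K" unfolding num2 K_def by simp
  show "((A / m2)^2 * X - B^2 * X) / 2 / ((A / m2)^2 * X + B^2 * X) = (m1 - m2 * m3) / (2 * (m1 + m2 * m3))"
    unfolding den' num1' using K0 by (intro ratio_cancel1) simp
  show "(- A / m2) * B * X / ((A / m2)^2 * X + B^2 * X) = - S / (m1 + m2 * m3)"
    unfolding den' num2' using K0 by (subst ratio_cancel2) simp_all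
qed

lemma bc31:
  assumes m: "m 1 > 0" "m 2 > 0" "m 3 > 0" "m 1 + m 2 + m 3 = 1"
  shows "binary_collision m 3 1 = vector [(m 1 - m 2 * m 3) / (2 * (m 1 + m 2 * m 3)), - sqrt (m 1 * m 2 * m 3) / (m 1 + m 2 * m 3), 0]"
  unfolding binary_collision_def
proof (rule the_shape)
  define A where "A = sqrt (m 1 * m 2 / (m 1 + m 2))"
  define B where "B = sqrt (m 3 / (m 1 + m 2))"
  have mu: "m 1 + m 2 > 0" using m by simp
  have A2: "A^2 = m 1 * m 2 / (m 1 + m 2)" unfolding A_def using m by simp
  have B2: "B^2 = m 3 / (m 1 + m 2)" unfolding B_def using m by simp
  have AB: "A * B = sqrt (m 1 * m 2 * m 3) / (m 1 + m 2)"
  proof -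
    have "A * B = sqrt (m 1 * m 2 / (m 1 + m 2) * (m 3 / (m 1 + m 2)))" unfolding A_def B_def by (rule real_sqrt_mult[symmetric])
    also have "m 1 * m 2 / (m 1 + m 2) * (m 3 / (m 1 + m 2)) = (m 1 * m 2 * m 3) / (m 1 + m 2)^2"
      by (simp add: power2_eq_square)
    also have "sqrt \<dots> = sqrt (m 1 * m 2 * m 3) / (m 1 + m 2)" using mu by (simp add: real_sqrt_divide)
    finally show ?thesis .
  qed
  show "\<forall>a'. is_mtriangle m a' \<and> a' 3 = a' 1 \<and> inertia m a' \<noteq> 0 \<longrightarrow> shape m a' =
     vector [(m 1 - m 2 * m 3) / (2 * (m 1 + m 2 * m 3)), - sqrt (m 1 * m 2 * m 3) / (m 1 + m 2 * m 3), 0]"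
  proof (intro allI impI)
    fix a' assume h: "is_mtriangle m a' \<and> a' 3 = a' 1 \<and> inertia m a' \<noteq> 0"
    define x where "x = a' 1"
    have t: "is_mtriangle m a'" using h by simp
    have e3: "a' 3 = a' 1" using h by simp
    have c: "m 1 *\<^sub>R x + m 2 *\<^sub>R a' 2 + m 3 *\<^sub>R x = 0" using t e3 unfolding is_mtriangle_def x_def by simp
    have "m 2 *\<^sub>R a' 2 = - ((m 1 + m 3) *\<^sub>R x)"
    proof -
      have "m 2 *\<^sub>R a' 2 = (m 1 *\<^sub>R x + m 2 *\<^sub>R a' 2 + m 3 *\<^sub>R x) - (m 1 *\<^sub>R x + m 3 *\<^sub>R x)" by simp
      then show ?thesis unfolding c by (simp add: scaleR_add_left)
    qed
    then have a2: "a' 2 = (- (m 1 + m 3) / m 2) *\<^sub>R x" using m(2)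
      by (metis (no_types, lifting) divide_inverse_commute inverse_eq_divide less_irrefl mult.commute scaleR_minus_left scaleR_scaleR nonzero_mult_div_cancel_left times_divide_eq_right divide_self_if scaleR_one)
    have d: "a' 2 - a' 1 = (- 1 / m 2) *\<^sub>R x"
    proof -
      have "a' 2 - a' 1 = (- (m 1 + m 3) / m 2 - 1) *\<^sub>R x" unfolding a2 x_def by (simp add: scaleR_diff_left)
      also have "- (m 1 + m 3) / m 2 - 1 = - 1 / m 2"
      proof -
        have s: "m 1 + m 3 = 1 - m 2" using m by simp
        show ?thesis unfolding s using m(2) by (simp add: field_simps)
      qed
      finally show ?thesis .
    qed
    have z1: "jacobi1 m a' = (- A / m2') *\<^sub>R x" if "m2' = m 2" for m2'
      unfolding jacobi1_def d A_def using that by simp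
    have z1: "jacobi1 m a' = (- A / m 2) *\<^sub>R x" using z1 by simp
    have z2: "jacobi2 m a' = B *\<^sub>R x" unfolding jac2_c[OF m t] B_def x_def using h by simp
    define X where "X = x \<bullet> x"
    have I: "inertia m a' = (A / m 2)^2 * X + B^2 * X"
      unfolding inertia_c[OF m t] z1 z2 X_def by (simp add: power_mult_distrib power2_norm_eq_inner power_divide)
    have X0: "X > 0"
    proof -
      have "X \<noteq> 0" using h I by auto
      then show ?thesis unfolding X_def by simp
    qed
    note alg = bc31_alg[OF m(1,2,3) A2 B2 AB X0]
    show "shape m a' = vector [(m 1 - m 2 * m 3) / (2 * (m 1 + m 2 * m 3)), - sqrt (m 1 * m 2 * m 3) / (m 1 + m 2 * m 3), 0]"
    proof -
      have nz1: "(norm (jacobi1 m a'))^2 = (A / m 2)^2 * X" unfolding z1 X_def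
        by (simp only: norm_scaleR power_mult_distrib power2_abs power2_norm_eq_inner) (simp add: power_divide)
      have nz2: "(norm (jacobi2 m a'))^2 = B^2 * X" unfolding z2 X_def
        by (simp add: power_mult_distrib power2_norm_eq_inner)
      have dz: "jacobi1 m a' \<bullet> jacobi2 m a' = (- A / m 2) * B * X" unfolding z1 z2 X_def by simp
      have cz: "cross3 (jacobi1 m a') (jacobi2 m a') = 0" unfolding z1 z2 by (simp add: cross_mult_left cross_mult_right)
      have s1: "(shape m a')$1 = ((A / m 2)^2 * X - B^2 * X) / 2 / ((A / m 2)^2 * X + B^2 * X)"
        unfolding shape_eq nz1 nz2 I by (simp add: vector_3)
      have s2: "(shape m a')$2 = (- A / m 2) * B * X / ((A / m 2)^2 * X + B^2 * X)"
        unfolding shape_eq dz I by (simp add: vector_3)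
      have s3: "(shape m a')$3 = 0"
        unfolding shape_eq cz by (simp add: vector_3)
      show ?thesis unfolding vec3_eq s1 s2 s3 alg by simp
    qed
  qed
next
  define e :: "real^3" where "e = axis 1 1"
  define a0 where "a0 = (\<lambda>i::nat. if i = 2 then (- (m 1 + m 3) / m 2) *\<^sub>R e else e)"
  have ne: "norm e = 1" unfolding e_def by simp
  have t: "is_mtriangle m a0"
  proof -
    have "m 2 *\<^sub>R ((- (m 1 + m 3) / m 2) *\<^sub>R e) = (- (m 1 + m 3)) *\<^sub>R e" using m by simp
    moreover have "a0 1 = e" "a0 3 = e" "a0 2 = (- (m 1 + m 3) / m 2) *\<^sub>R e" by (simp_all add: a0_def)
    moreover have "m 1 *\<^sub>R e + (- (m 1 + m 3)) *\<^sub>R e + m 3 *\<^sub>R e = (m 1 + (- (m 1 + m 3)) + m 3) *\<^sub>R e"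
      by (simp only: scaleR_add_left)
    ultimately show ?thesis unfolding is_mtriangle_def using m(2) by simp
  qed
  have "inertia m a0 = m 1 + m 2 * ((m 1 + m 3) / m 2)^2 + m 3"
    unfolding inertia_def a0_def using ne m by (simp add: power_mult_distrib abs_of_pos)
  moreover have "m 1 + m 2 * ((m 1 + m 3) / m 2)^2 + m 3 > 0" using m by (intro add_pos_pos) auto
  ultimately show "is_mtriangle m a0 \<and> a0 3 = a0 1 \<and> inertia m a0 \<noteq> 0" using t by (simp add: a0_def)
qed

lemma cis_eq_angle:
  assumes "cis x = cis y" "0 \<le> x" "x \<le> 2*pi" "0 < y" "y < 2*pi"
  shows "x = y"
proof -
  have c: "cos x = cos y" and s: "sin x = sin y"
    using arg_cong[OF assms(1), of Re] arg_cong[OF assms(1), of Im] by simp_all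
  have "cos (x - y) = 1" unfolding cos_diff c s by (simp add: power2_eq_square[symmetric])
  then obtain n :: int where n: "x - y = real_of_int n * 2 * pi" using cos_one_2pi_int by blast
  have "\<bar>x - y\<bar> < 2 * pi" using assms by auto
  then have "\<bar>real_of_int n\<bar> * (2 * pi) < 1 * (2 * pi)" unfolding n by (simp add: abs_mult)
  then have "\<bar>real_of_int n\<bar> < 1" using pi_gt_zero by (simp only: mult_less_cancel_right)
  then have "n = 0" by linarith
  then show ?thesis using n by simp
qed

lemma va_scale: "c > 0 \<Longrightarrow> d > 0 \<Longrightarrow> vec_angle (c *\<^sub>R x) (d *\<^sub>R y) = vec_angle x y"
  unfolding vec_angle_def by (simp add: field_simps)

lemma sph_tri_swap: "sph_triangle r P Q R = sph_triangle r P R Q"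
  unfolding sph_triangle_def
proof (intro Collect_cong conj_cong refl iffI)
  fix x assume "\<exists>u v w. 0 \<le> u \<and> 0 \<le> v \<and> 0 \<le> w \<and> x = u *\<^sub>R P + v *\<^sub>R Q + w *\<^sub>R R"
  then obtain u v w where h: "0 \<le> u" "0 \<le> v" "0 \<le> w" "x = u *\<^sub>R P + v *\<^sub>R Q + w *\<^sub>R R" by blast
  then have "x = u *\<^sub>R P + w *\<^sub>R R + v *\<^sub>R Q" by (simp add: algebra_simps)
  then show "\<exists>u v w. 0 \<le> u \<and> 0 \<le> v \<and> 0 \<le> w \<and> x = u *\<^sub>R P + v *\<^sub>R R + w *\<^sub>R Q" using h by blast
next
  fix x assume "\<exists>u v w. 0 \<le> u \<and> 0 \<le> v \<and> 0 \<le> w \<and> x = u *\<^sub>R P + v *\<^sub>R R + w *\<^sub>R Q"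
  then obtain u v w where h: "0 \<le> u" "0 \<le> v" "0 \<le> w" "x = u *\<^sub>R P + v *\<^sub>R R + w *\<^sub>R Q" by blast
  then have "x = u *\<^sub>R P + w *\<^sub>R Q + v *\<^sub>R R" by (simp add: algebra_simps)
  then show "\<exists>u v w. 0 \<le> u \<and> 0 \<le> v \<and> 0 \<le> w \<and> x = u *\<^sub>R P + v *\<^sub>R Q + w *\<^sub>R R" using h by blast
qed

lemma va_nonneg: "0 \<le> vec_angle x y"
proof -
  define c where "c = (x \<bullet> y) / (norm x * norm y)"
  define N where "N = norm x * norm y"
  have cs: "\<bar>x \<bullet> y\<bar> \<le> N" unfolding N_def by (rule Cauchy_Schwarz_ineq2)
  have N0: "N \<ge> 0" unfolding N_def by simp
  have ac: "\<bar>c\<bar> \<le> 1"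
  proof (cases "N = 0")
    case True
    then have "c = 0" unfolding c_def N_def[symmetric] by simp
    then show ?thesis by simp
  next
    case False
    then have Np: "N > 0" using N0 by simp
    have "\<bar>c\<bar> = \<bar>x \<bullet> y\<bar> / N" unfolding c_def N_def[symmetric] using Np by (simp add: abs_divide)
    also have "\<dots> \<le> 1" using cs Np by (simp add: divide_le_eq)
    finally show ?thesis .
  qed
  have "0 \<le> arccos c" by (rule arccos_lbound) (use ac in \<open>simp_all add: abs_le_iff\<close>)
  then show ?thesis unfolding vec_angle_def c_def .
qed

lemma final_geom:
  fixes P Q R :: "real^3"
  assumes nP: "norm (2 *\<^sub>R P) = 1" and nQ: "norm (2 *\<^sub>R Q) = 1" and nR: "norm (2 *\<^sub>R R) = 1"
    and D: "(2 *\<^sub>R P) \<bullet> cross3 (2 *\<^sub>R R) (2 *\<^sub>R Q) > 0"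
    and rel: "cnj (Complex (1 + (2 *\<^sub>R Q) \<bullet> (2 *\<^sub>R R) + (2 *\<^sub>R R) \<bullet> (2 *\<^sub>R P) + (2 *\<^sub>R P) \<bullet> (2 *\<^sub>R Q))
                     ((2 *\<^sub>R P) \<bullet> cross3 (2 *\<^sub>R R) (2 *\<^sub>R Q))) = complex_of_real \<nu> * cis \<alpha>"
    and al: "0 < \<alpha>" "\<alpha> < pi"
  shows "sph_area (1/2) (sph_triangle (1/2) P Q R) = (pi - \<alpha>) / 2"
proof -
  define p where "p = 2 *\<^sub>R P"
  define q where "q = 2 *\<^sub>R Q"
  define r where "r = 2 *\<^sub>R R"
  note defs = p_def[symmetric] q_def[symmetric] r_def[symmetric]
  define \<Sigma> where "\<Sigma> = vec_angle (cross3 q p) (cross3 p r) + vec_angle (cross3 p r) (cross3 r q) + vec_angle (cross3 r q) (cross3 q p)"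
  obtain l where l: "l > 0" "cis \<Sigma> = complex_of_real l * (cnj (Complex (1 + q \<bullet> r + r \<bullet> p + p \<bullet> q) (p \<bullet> cross3 r q)))^2"
    using angle_sum[OF nP[folded p_def] nQ[folded q_def] nR[folded r_def] D[folded p_def q_def r_def]] unfolding \<Sigma>_def by blast
  have "cis \<Sigma> = complex_of_real (l * \<nu>^2) * cis (2 * \<alpha>)"
  proof -
    have "(cis \<alpha>)^2 = cis \<alpha> * cis \<alpha>" by (simp only: power2_eq_square)
    also have "\<dots> = cis (\<alpha> + \<alpha>)" by (rule cis_mult)
    finally have "(cis \<alpha>)^2 = cis (2 * \<alpha>)" by (simp only: mult_2)
    then show ?thesis unfolding l(2) rel[folded p_def q_def r_def] by (simp add: power_mult_distrib)
  qed
  moreover have "norm (cis \<Sigma>) = 1" by simp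
  ultimately have "\<bar>l * \<nu>^2\<bar> = 1" by (simp add: norm_mult norm_power abs_mult)
  then have "l * \<nu>^2 = 1" using l(1) by simp
  with \<open>cis \<Sigma> = complex_of_real (l * \<nu>^2) * cis (2 * \<alpha>)\<close> have cs: "cis \<Sigma> = cis (2 * \<alpha>)" by simp
  have cq: "cross3 Q P = (1/4) *\<^sub>R cross3 q p" "cross3 P R = (1/4) *\<^sub>R cross3 p r" "cross3 R Q = (1/4) *\<^sub>R cross3 r q"
    unfolding p_def q_def r_def by (simp_all add: cross_mult_left cross_mult_right)
  have \<Sigma>': "\<Sigma> = vec_angle (cross3 Q P) (cross3 P R) + vec_angle (cross3 P R) (cross3 R Q) + vec_angle (cross3 R Q) (cross3 Q P)"
    unfolding cq \<Sigma>_def by (simp add: va_scale)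
  have DP: "P \<bullet> cross3 R Q > 0"
  proof -
    have "(2 *\<^sub>R P) \<bullet> cross3 (2 *\<^sub>R R) (2 *\<^sub>R Q) = 8 * (P \<bullet> cross3 R Q)" by (simp add: cross_mult_left cross_mult_right)
    then show ?thesis using D by simp
  qed
  have area: "sph_area (1/2) (sph_triangle (1/2) P Q R) = (1/4) * (2 * pi - \<Sigma>)"
  proof -
    have "sph_area (1/2) (sph_triangle (1/2) P R Q) = (1/2)^2 * (2*pi - (vec_angle (cross3 Q P) (cross3 P R) + vec_angle (cross3 P R) (cross3 R Q) + vec_angle (cross3 R Q) (cross3 Q P)))"
      by (rule sph_area_tri[OF DP]) simp
    then show ?thesis unfolding sph_tri_swap[of _ P Q R] \<Sigma>' by (simp add: power2_eq_square)
  qed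
  have "sph_area (1/2) (sph_triangle (1/2) P Q R) \<ge> 0" unfolding sph_area_def by simp
  then have S1: "\<Sigma> \<le> 2 * pi" unfolding area by simp
  have S0: "\<Sigma> \<ge> 0" unfolding \<Sigma>_def by (intro add_nonneg_nonneg va_nonneg)
  have "\<Sigma> = 2 * \<alpha>" by (rule cis_eq_angle[OF cs S0 S1]) (use al in auto)
  then show ?thesis unfolding area by simp
qed

lemma key_alg:
  fixes q1 q2 q3 rx ry Z1 Z2 d c I iI iM m1 m2 m3 sq B C G23 G33 K :: real
  assumes "q1 = (Z1 - Z2) * iI" "q2 = 2 * d * iI" "q3 = 2 * c * iI" "I = Z1 + Z2" "I * iI = 1"
    "rx = (m1 - m2 * m3) * iM" "ry = - 2 * sq * iM" "(m1 + m2 * m3) * iM = 1"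
    "Z2 = B^2 * G33" "d = C * B * ((m1 + m2) * G23 + m3 * G33)" "c = C * B * (m1 + m2) * K" "sq * C = m2 * B"
  shows "(1 + (q1 * rx + q2 * ry) + (- rx) + (- q1)) * K + (- (ry * q3)) * G23 = 0"
  using assms by algebra

lemma norm1_from_inner: "(v::real^3) \<bullet> v = 1 \<Longrightarrow> norm v = 1"
  by (simp add: norm_eq_sqrt_inner)

theorem mainTheorem16:
  fixes m :: "nat \<Rightarrow> real" and a :: "nat \<Rightarrow> real^3"
  assumes "m 1 > 0" "m 2 > 0" "m 3 > 0" "m 1 + m 2 + m 3 = 1"
    and "is_mtriangle m a"
    and "nondegenerate a"
  shows "sph_area (1/2) (sph_triangle (1/2) (binary_collision m 1 2) (shape m a)
            (binary_collision m 3 1))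
         = (pi - vec_angle (a 2) (a 3)) / 2"
proof -
  note m = assms(1-4)
  note t = assms(5)
  define m1 where "m1 = m 1"
  define m2 where "m2 = m 2"
  define m3 where "m3 = m 3"
  have m1p: "m1 > 0" and m2p: "m2 > 0" and m3p: "m3 > 0" and msum: "m1 + m2 + m3 = 1"
    using m by (simp_all add: m1_def m2_def m3_def)
  define P :: "real^3" where "P = vector [-1/2, 0, 0]"
  define sq where "sq = sqrt (m1 * m2 * m3)"
  define R :: "real^3" where "R = vector [(m1 - m2 * m3) / (2 * (m1 + m2 * m3)), - sq / (m1 + m2 * m3), 0]"
  define Q where "Q = shape m a"
  have bP: "binary_collision m 1 2 = P" unfolding P_def by (rule bc12[OF m])
  have bR: "binary_collision m 3 1 = R" unfolding R_def sq_def m1_def m2_def m3_def by (rule bc31[OF m])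
  define x2 where "x2 = a 2"
  define x3 where "x3 = a 3"
  have a1: "a 1 = (- m2 / m1) *\<^sub>R x2 + (- m3 / m1) *\<^sub>R x3"
    unfolding x2_def x3_def m1_def m2_def m3_def by (rule a1_eq[OF m(1) t])
  have crossa: "cross3 (a 2 - a 1) (a 3 - a 1) = (1 / m1) *\<^sub>R cross3 x2 x3"
  proof -
    define u where "u = m2 / m1"
    define w where "w = m3 / m1"
    have a1': "a 1 = (- u) *\<^sub>R x2 + (- w) *\<^sub>R x3" unfolding a1 u_def w_def by simp
    have "cross3 (a 2 - a 1) (a 3 - a 1) = (1 + w + u) *\<^sub>R cross3 x2 x3"
      unfolding a1' x2_def[symmetric] x3_def[symmetric]
      by (simp add: cross3_def vec_eq_iff forall_3 vector_3 algebra_simps)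
    also have "1 + w + u = 1 / m1" using m1p msum unfolding u_def w_def by (simp add: field_simps)
    finally show ?thesis .
  qed
  have cr: "cross3 x2 x3 \<noteq> 0" using assms(6) unfolding nondegenerate_def crossa by simp
  define \<mu> where "\<mu> = m1 + m2"
  have mup: "\<mu> > 0" unfolding \<mu>_def using m1p m2p by simp
  define B where "B = sqrt (m3 / \<mu>)"
  define C where "C = sqrt (m1 * m2 / \<mu>) / m1"
  have Bp: "B > 0" unfolding B_def using m3p mup by simp
  have Cp: "C > 0" unfolding C_def using m1p m2p mup by simp
  define z1 where "z1 = jacobi1 m a"
  define z2 where "z2 = jacobi2 m a"
  have z2: "z2 = B *\<^sub>R x3" unfolding z2_def jac2_c[OF m t] B_def \<mu>_def m1_def m2_def m3_def x3_def ..
  have z1: "z1 = C *\<^sub>R (\<mu> *\<^sub>R x2 + m3 *\<^sub>R x3)"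
  proof -
    have "a 2 - a 1 = (1 + m2 / m1) *\<^sub>R x2 + (m3 / m1) *\<^sub>R x3" unfolding a1 x2_def by (simp add: algebra_simps)
    also have "\<dots> = (1 / m1) *\<^sub>R (\<mu> *\<^sub>R x2 + m3 *\<^sub>R x3)"
    proof -
      have "1 + m2 / m1 = (1 / m1) * \<mu>" unfolding \<mu>_def using m1p by (simp add: field_simps)
      moreover have "m3 / m1 = (1 / m1) * m3" by simp
      ultimately show ?thesis by (simp add: scaleR_add_right)
    qed
    finally show ?thesis unfolding z1_def jacobi1_def C_def \<mu>_def m1_def m2_def by simp
  qed
  define G23 where "G23 = x2 \<bullet> x3"
  define G33 where "G33 = x3 \<bullet> x3"
  define K where "K = norm (cross3 x2 x3)"
  have Kp: "K > 0" unfolding K_def using cr by simp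
  have x30: "x3 \<noteq> 0" using cr by auto
  have G33p: "G33 > 0" unfolding G33_def using x30 by simp
  define Z1 where "Z1 = (norm z1)^2"
  define Z2 where "Z2 = (norm z2)^2"
  define dd where "dd = z1 \<bullet> z2"
  define cc where "cc = norm (cross3 z1 z2)"
  define I where "I = inertia m a"
  have hI: "I = Z1 + Z2" unfolding I_def Z1_def Z2_def z1_def z2_def by (rule inertia_c[OF m t])
  have hZ2: "Z2 = B^2 * G33" unfolding Z2_def z2 G33_def by (simp add: power_mult_distrib power2_norm_eq_inner)
  have hdd: "dd = C * B * (\<mu> * G23 + m3 * G33)" unfolding dd_def z1 z2 G23_def G33_def
    by (simp add: inner_add_left algebra_simps)
  have hcc: "cc = C * B * \<mu> * K"
  proof -
    have "cross3 z1 z2 = (C * B * \<mu>) *\<^sub>R cross3 x2 x3"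
      unfolding z1 z2 by (simp add: cross_mult_left cross_mult_right cross_add_left)
    then show ?thesis unfolding cc_def K_def using Cp Bp mup by simp
  qed
  have Z1n: "Z1 \<ge> 0" unfolding Z1_def by simp
  have Z2p: "Z2 > 0" unfolding hZ2 using Bp G33p by simp
  have Ip: "I > 0" unfolding hI using Z1n Z2p by simp
  have sqC: "sq * C = m2 * B"
  proof -
    have "sq * C = sqrt (m1 * m2 * m3) * sqrt (m1 * m2 / \<mu>) / m1" unfolding sq_def C_def by simp
    also have "sqrt (m1 * m2 * m3) * sqrt (m1 * m2 / \<mu>) = sqrt (m1 * m2 * m3 * (m1 * m2 / \<mu>))" by (rule real_sqrt_mult[symmetric])
    also have "m1 * m2 * m3 * (m1 * m2 / \<mu>) = (m1 * m2)^2 * (m3 / \<mu>)" by (simp add: power2_eq_square)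
    also have "sqrt \<dots> = m1 * m2 * B"
    proof -
      have "sqrt ((m1 * m2)^2 * (m3 / \<mu>)) = sqrt ((m1 * m2)^2) * sqrt (m3 / \<mu>)" by (rule real_sqrt_mult)
      then show ?thesis unfolding B_def using m1p m2p by simp
    qed
    finally show ?thesis using m1p by simp
  qed
  define iI where "iI = 1 / I"
  have hiI: "I * iI = 1" unfolding iI_def using Ip by simp
  have iIp: "iI > 0" unfolding iI_def using Ip by simp
  define iM where "iM = 1 / (m1 + m2 * m3)"
  have mq: "m1 + m2 * m3 > 0" using m1p m2p m3p by (simp add: add_pos_pos)
  have hiM: "(m1 + m2 * m3) * iM = 1" unfolding iM_def using mq by simp
  have iMp: "iM > 0" unfolding iM_def using mq by simp
  have Qeq: "Q = (1 / I) *\<^sub>R vector [(Z1 - Z2) / 2, dd, cc]"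
    unfolding Q_def shape_eq I_def Z1_def Z2_def dd_def cc_def z1_def z2_def ..
  define p where "p = 2 *\<^sub>R P"
  define q where "q = 2 *\<^sub>R Q"
  define r where "r = 2 *\<^sub>R R"
  have q1: "q$1 = (Z1 - Z2) * iI" unfolding q_def Qeq iI_def using Ip by (simp add: vector_3 field_simps)
  have q2: "q$2 = 2 * dd * iI" and q3: "q$3 = 2 * cc * iI"
    unfolding q_def Qeq iI_def by (simp_all add: vector_3)
  have r1: "r$1 = (m1 - m2 * m3) * iM" unfolding r_def R_def iM_def using mq by (simp add: vector_3 field_simps)
  have r2: "r$2 = - 2 * sq * iM" and r3: "r$3 = 0"
    unfolding r_def R_def iM_def by (simp_all add: vector_3)
  have p1: "p$1 = -1" and p2: "p$2 = 0" and p3: "p$3 = 0"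
    unfolding p_def P_def by (simp_all add: vector_3)
  have Dform: "p \<bullet> cross3 r q = - (r$2 * q$3)"
    by (simp add: inner3 cross3_def vector_3 p1 p2 p3 r3)
  have qr: "q \<bullet> r = q$1 * r$1 + q$2 * r$2" by (simp add: inner3 r3)
  have rp: "r \<bullet> p = - r$1" by (simp add: inner3 p1 p2 p3)
  have pq: "p \<bullet> q = - q$1" by (simp add: inner3 p1 p2 p3)
  have key: "(1 + (q$1 * r$1 + q$2 * r$2) + (- r$1) + (- q$1)) * K + (- (r$2 * q$3)) * G23 = 0"
    by (rule key_alg[OF q1 q2 q3 hI hiI r1 r2 hiM hZ2 hdd[unfolded \<mu>_def] hcc[unfolded \<mu>_def] sqC])
  have ncd: "cc^2 + dd^2 = Z1 * Z2"
    unfolding cc_def dd_def Z1_def Z2_def using norm_cross_dot[of z1 z2] by (simp add: power_mult_distrib)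
  have qq: "q \<bullet> q = 1"
  proof -
    have "q \<bullet> q = (q$1)^2 + (q$2)^2 + (q$3)^2" by (simp add: inner3 power2_eq_square)
    also have "\<dots> = 1" unfolding q1 q2 q3 using ncd hI hiI by algebra
    finally show ?thesis .
  qed
  have sq2: "sq^2 = m1 * m2 * m3" unfolding sq_def using m1p m2p m3p by simp
  have rr: "r \<bullet> r = 1"
  proof -
    have "r \<bullet> r = (r$1)^2 + (r$2)^2" by (simp add: inner3 power2_eq_square r3)
    also have "\<dots> = 1" unfolding r1 r2 using sq2 hiM by algebra
    finally show ?thesis .
  qed
  have pp: "p \<bullet> p = 1" by (simp add: inner3 p1 p2 p3)
  have sqp: "sq > 0" unfolding sq_def using m1p m2p m3p by simp
  have ccp: "cc > 0" unfolding hcc using Cp Bp mup Kp by simp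
  have Dp: "p \<bullet> cross3 r q > 0"
  proof -
    have "r$2 < 0" unfolding r2 using sqp iMp by (simp add: mult_pos_pos)
    moreover have "q$3 > 0" unfolding q3 using ccp iIp by simp
    ultimately show ?thesis unfolding Dform by (simp add: mult_neg_pos)
  qed
  define \<alpha> where "\<alpha> = vec_angle x2 x3"
  define n where "n = norm x2 * norm x3"
  have x20: "x2 \<noteq> 0" using cr by auto
  have np: "n > 0" unfolding n_def using x20 x30 by simp
  define iN where "iN = 1 / n"
  have hiN: "n * iN = 1" unfolding iN_def using np by simp
  have cisal: "cis \<alpha> = complex_of_real iN * Complex G23 K"
    unfolding \<alpha>_def cis_va[OF cr] iN_def n_def G23_def K_def ..
  have ncd2: "G23^2 + K^2 = n^2"
    unfolding G23_def K_def n_def using norm_cross_dot[of x2 x3] by simp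
  define S where "S = 1 + q \<bullet> r + r \<bullet> p + p \<bullet> q"
  define Dv where "Dv = p \<bullet> cross3 r q"
  have key2: "S * K + Dv * G23 = 0"
    unfolding S_def Dv_def qr rp pq Dform using key by (simp add: algebra_simps)
  define \<nu> where "\<nu> = (S * G23 - Dv * K) * iN"
  have rel: "cnj (Complex S Dv) = complex_of_real \<nu> * cis \<alpha>"
  proof (rule complex_eqI)
    show "Re (cnj (Complex S Dv)) = Re (complex_of_real \<nu> * cis \<alpha>)"
      unfolding cisal \<nu>_def using key2 ncd2 hiN by simp algebra
    show "Im (cnj (Complex S Dv)) = Im (complex_of_real \<nu> * cis \<alpha>)"
      unfolding cisal \<nu>_def using key2 ncd2 hiN by simp algebra
  qed
  have alb: "0 < \<alpha>" "\<alpha> < pi" using va_props[OF cr] unfolding \<alpha>_def by auto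
  have "sph_area (1/2) (sph_triangle (1/2) P Q R) = (pi - \<alpha>) / 2"
  proof (rule final_geom[of P Q R \<nu> \<alpha>])
    show "norm (2 *\<^sub>R P) = 1" using pp unfolding p_def by (rule norm1_from_inner)
    show "norm (2 *\<^sub>R Q) = 1" using qq unfolding q_def by (rule norm1_from_inner)
    show "norm (2 *\<^sub>R R) = 1" using rr unfolding r_def by (rule norm1_from_inner)
    show "(2 *\<^sub>R P) \<bullet> cross3 (2 *\<^sub>R R) (2 *\<^sub>R Q) > 0" using Dp unfolding p_def q_def r_def .
    show "cnj (Complex (1 + (2 *\<^sub>R Q) \<bullet> (2 *\<^sub>R R) + (2 *\<^sub>R R) \<bullet> (2 *\<^sub>R P) + (2 *\<^sub>R P) \<bullet> (2 *\<^sub>R Q))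
                     ((2 *\<^sub>R P) \<bullet> cross3 (2 *\<^sub>R R) (2 *\<^sub>R Q))) = complex_of_real \<nu> * cis \<alpha>"
      using rel unfolding S_def Dv_def p_def q_def r_def .
  qed (use alb in auto)
  then show ?thesis unfolding bP bR Q_def \<alpha>_def x2_def x3_def .
qed

end
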